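(* Under the setup and conditions of the context, DDD-PCT and no anticipation, for every $j\in\mathcal E$ (including $j<0$) the population coefficient $\alpha_j$ of the regression $Y_{i,t}=\alpha_i+\delta_{S_i,t}+\eta_{Q_i,t}+\sum_{e\in\mathcal E}\alpha_eR_e(i,t)+\varepsilon_{i,t}$ satisfies $$\alpha_j=\sum_{g\in\mathcal G_{\mathrm{trg}}}\sum_{\ell=0}^{K}\omega^{j,\star}_{g,\ell}\,\mathrm{CATT}(g,\ell).$$
   Context: Setup: balanced panel of units $i$ over $t\in\{1,\dots,T\}$; treatment-enabling group $S_i\in\mathcal S\subseteq\{2,\dots,T\}\cup\{\infty\}$; time-invariant eligibility $Q_i\in\{0,1\}$; $\mathcal G_{\mathrm{trg}}=\mathcal S\setminus\{\infty\}$. Potential outcomes $Y_{i,t}(g)$, $g\in\mathcal G_{\mathrm{trg}}$, and $Y_{i,t}(\infty)$; observed $Y_{i,t}=Y_{i,t}(g)$ if $S_i=g\in\mathcal G_{\mathrm{trg}}$ and $Q_i=1$, else $Y_{i,t}=Y_{i,t}(\infty)$. Data i.i.d. with finite second moments. $\mathrm{CATT}(g,e)=\mathbb E[Y_{i,g+e}(g)-Y_{i,g+e}(\infty)\mid S_i=g,Q_i=1]$. $\mathcal E=\{-L,\dots,K\}\setminus\{-1\}$; the window covers all event times. $R_e(i,t)=\mathbb 1\{t-S_i=e\}Q_i$, $R_{g,\ell}(i,t)=\mathbb 1\{S_i=g,Q_i=1,t=g+\ell\}$; population least-squares coefficients over units and periods; the Gram matrix of the three-way demeaned (unit, group-by-time,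 eligibility-by-time) event-time indicators is nonsingular. $\omega^{j,\star}_{g,\ell}$: coefficient on $R_j$ in the population regression of $R_{g,\ell}$ on $\alpha_i,\delta_{S_i,t},\eta_{Q_i,t},\{R_e\}_{e\in\mathcal E}$. No anticipation: $Y_{i,t}(g)=Y_{i,t}(\infty)$ a.s. for all $g\in\mathcal G_{\mathrm{trg}}$, $t<g$. DDD-PCT: for all $g\in\mathcal G_{\mathrm{trg}}$, $g_c\in\mathcal S$ with $g_c>g$, $t\in\{2,\dots,T\}$ with $t\le g_c$: $\Delta_t(g,1)-\Delta_t(g,0)=\Delta_t(g_c,1)-\Delta_t(g_c,0)$, where $\Delta_t(s,q)=\mathbb E[Y_{i,t}(\infty)-Y_{i,t-1}(\infty)\mid S_i=s,Q_i=q]$. *)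

theory Defs
  imports "HOL-Probability.Probability" "HOL-Library.Extended_Nat"
begin

text \<open>A generic unit is modelled by a probability space M (data i.i.d. across units,
so population moments are expectations under M).
The enabling group S takes values in enat (infinity = never enabled), eligibility Q in {0,1}.
Potential outcomes: Yinf t = Y_t(infinity), Ypot g t = Y_t(g).\<close>

definition Gtrg :: "enat set \<Rightarrow> nat set" where
  "Gtrg SS = {g. enat g \<in> SS}"

definition event_window :: "nat \<Rightarrow> nat \<Rightarrow> int set" where
  "event_window L K = {- int L..int K} - {-1}"

definition Rev :: "('a \<Rightarrow> enat) \<Rightarrow> ('a \<Rightarrow> nat) \<Rightarrow> int \<Rightarrow> nat \<Rightarrow> 'a \<Rightarrow> real" where
  "Rev S Q e t w = (if (\<exists>g. S w = enat g \<and> int t - int g = e) \<and> Q w = 1 then 1 else 0)"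

definition Rgl :: "('a \<Rightarrow> enat) \<Rightarrow> ('a \<Rightarrow> nat) \<Rightarrow> nat \<Rightarrow> nat \<Rightarrow> nat \<Rightarrow> 'a \<Rightarrow> real" where
  "Rgl S Q g l t w = (if S w = enat g \<and> Q w = 1 \<and> t = g + l then 1 else 0)"

definition Yobs :: "('a \<Rightarrow> enat) \<Rightarrow> ('a \<Rightarrow> nat) \<Rightarrow> (nat \<Rightarrow> 'a \<Rightarrow> real) \<Rightarrow> (nat \<Rightarrow> nat \<Rightarrow> 'a \<Rightarrow> real)
    \<Rightarrow> nat \<Rightarrow> 'a \<Rightarrow> real" where
  "Yobs S Q Yinf Ypot t w =
     (case S w of enat g \<Rightarrow> (if Q w = 1 then Ypot g t w else Yinf t w) | \<infinity> \<Rightarrow> Yinf t w)"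

definition ls_obj :: "'a measure \<Rightarrow> nat \<Rightarrow> ('a \<Rightarrow> enat) \<Rightarrow> ('a \<Rightarrow> nat) \<Rightarrow> int set
    \<Rightarrow> (nat \<Rightarrow> 'a \<Rightarrow> real) \<Rightarrow> ('a \<Rightarrow> real) \<Rightarrow> (enat \<Rightarrow> nat \<Rightarrow> real) \<Rightarrow> (nat \<Rightarrow> nat \<Rightarrow> real)
    \<Rightarrow> (int \<Rightarrow> real) \<Rightarrow> real" where
  "ls_obj M T S Q E X a d h b =
     (\<integral>w. (\<Sum>t\<in>{1..T}. (X t w - a w - d (S w) t - h (Q w) t - (\<Sum>e\<in>E. b e * Rev S Q e t w))\<^sup>2) \<partial>M)"

definition unit_effect :: "'a measure \<Rightarrow> ('a \<Rightarrow> real) \<Rightarrow> bool" where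
  "unit_effect M a \<longleftrightarrow> a \<in> borel_measurable M \<and> integrable M (\<lambda>w. (a w)\<^sup>2)"

definition is_ls_min :: "'a measure \<Rightarrow> nat \<Rightarrow> ('a \<Rightarrow> enat) \<Rightarrow> ('a \<Rightarrow> nat) \<Rightarrow> int set
    \<Rightarrow> (nat \<Rightarrow> 'a \<Rightarrow> real) \<Rightarrow> ('a \<Rightarrow> real) \<Rightarrow> (enat \<Rightarrow> nat \<Rightarrow> real) \<Rightarrow> (nat \<Rightarrow> nat \<Rightarrow> real)
    \<Rightarrow> (int \<Rightarrow> real) \<Rightarrow> bool" where
  "is_ls_min M T S Q E X a d h b \<longleftrightarrow> unit_effect M a \<and>
     (\<forall>a' d' h' b'. unit_effect M a' \<longrightarrow> ls_obj M T S Q E X a d h b \<le> ls_obj M T S Q E X a' d' h' b')"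

definition pop_coef :: "'a measure \<Rightarrow> nat \<Rightarrow> ('a \<Rightarrow> enat) \<Rightarrow> ('a \<Rightarrow> nat) \<Rightarrow> int set
    \<Rightarrow> (nat \<Rightarrow> 'a \<Rightarrow> real) \<Rightarrow> int \<Rightarrow> real" where
  "pop_coef M T S Q E X = (SOME b. \<exists>a d h. is_ls_min M T S Q E X a d h b)"

definition omega_w :: "'a measure \<Rightarrow> nat \<Rightarrow> ('a \<Rightarrow> enat) \<Rightarrow> ('a \<Rightarrow> nat) \<Rightarrow> int set
    \<Rightarrow> int \<Rightarrow> nat \<Rightarrow> nat \<Rightarrow> real" where
  "omega_w M T S Q E j g l = pop_coef M T S Q E (Rgl S Q g l) j"

text \<open>Three-way (unit, group-by-time, eligibility-by-time) demeaning: residual of the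
population projection on the fixed effects only.\<close>
definition fe_resid :: "'a measure \<Rightarrow> nat \<Rightarrow> ('a \<Rightarrow> enat) \<Rightarrow> ('a \<Rightarrow> nat)
    \<Rightarrow> (nat \<Rightarrow> 'a \<Rightarrow> real) \<Rightarrow> nat \<Rightarrow> 'a \<Rightarrow> real" where
  "fe_resid M T S Q X =
     (let p = (SOME p. is_ls_min M T S Q {} X (fst p) (fst (snd p)) (snd (snd p)) (\<lambda>_. 0))
      in (\<lambda>t w. X t w - fst p w - fst (snd p) (S w) t - snd (snd p) (Q w) t))"

definition demeaned_gram :: "'a measure \<Rightarrow> nat \<Rightarrow> ('a \<Rightarrow> enat) \<Rightarrow> ('a \<Rightarrow> nat)
    \<Rightarrow> int \<Rightarrow> int \<Rightarrow> real" where
  "demeaned_gram M T S Q e e' =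
     (\<integral>w. (\<Sum>t\<in>{1..T}. fe_resid M T S Q (Rev S Q e) t w * fe_resid M T S Q (Rev S Q e') t w) \<partial>M)"

definition nonsingular_on :: "int set \<Rightarrow> (int \<Rightarrow> int \<Rightarrow> real) \<Rightarrow> bool" where
  "nonsingular_on E G \<longleftrightarrow>
     (\<forall>c. (\<forall>e\<in>E. (\<Sum>e'\<in>E. G e e' * c e') = 0) \<longrightarrow> (\<forall>e\<in>E. c e = 0))"

definition cond_mean :: "'a measure \<Rightarrow> 'a set \<Rightarrow> ('a \<Rightarrow> real) \<Rightarrow> real" where
  "cond_mean M A X = (\<integral>w. indicator A w * X w \<partial>M) / measure M A"

definition CATT :: "'a measure \<Rightarrow> ('a \<Rightarrow> enat) \<Rightarrow> ('a \<Rightarrow> nat) \<Rightarrow> (nat \<Rightarrow> 'a \<Rightarrow> real)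
    \<Rightarrow> (nat \<Rightarrow> nat \<Rightarrow> 'a \<Rightarrow> real) \<Rightarrow> nat \<Rightarrow> nat \<Rightarrow> real" where
  "CATT M S Q Yinf Ypot g e =
     cond_mean M {w \<in> space M. S w = enat g \<and> Q w = 1} (\<lambda>w. Ypot g (g + e) w - Yinf (g + e) w)"

definition Delta :: "'a measure \<Rightarrow> ('a \<Rightarrow> enat) \<Rightarrow> ('a \<Rightarrow> nat) \<Rightarrow> (nat \<Rightarrow> 'a \<Rightarrow> real)
    \<Rightarrow> nat \<Rightarrow> enat \<Rightarrow> nat \<Rightarrow> real" where
  "Delta M S Q Yinf t s q =
     cond_mean M {w \<in> space M. S w = s \<and> Q w = q} (\<lambda>w. Yinf t w - Yinf (t - 1) w)"

end

theory Submission
  imports Defs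
begin
lemma sq_int_mult:
  fixes f g :: "'a \<Rightarrow> real"
  assumes "f \<in> borel_measurable M" "g \<in> borel_measurable M"
    "integrable M (\<lambda>w. (f w)\<^sup>2)" "integrable M (\<lambda>w. (g w)\<^sup>2)"
  shows "integrable M (\<lambda>w. f w * g w)"
proof (rule Bochner_Integration.integrable_bound[where f="\<lambda>w. (f w)\<^sup>2 + (g w)\<^sup>2"])
  show "integrable M (\<lambda>w. (f w)\<^sup>2 + (g w)\<^sup>2)" using assms by auto
  show "(\<lambda>w. f w * g w) \<in> borel_measurable M" using assms by measurable
  show "AE x in M. norm (f x * g x) \<le> norm ((f x)\<^sup>2 + (g x)\<^sup>2)"
  proof (intro AE_I2)
    fix x
    have "2 * \<bar>f x * g x\<bar> \<le> (f x)\<^sup>2 + (g x)\<^sup>2"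
      using sum_squares_bound[of "\<bar>f x\<bar>" "\<bar>g x\<bar>"]
      by (simp add: abs_mult power2_eq_square)
    moreover have "norm (f x * g x) = \<bar>f x\<bar> * \<bar>g x\<bar>" by (simp add: abs_mult)
    moreover have "norm ((f x)\<^sup>2 + (g x)\<^sup>2) = (f x)\<^sup>2 + (g x)\<^sup>2" by simp
    moreover have "0 \<le> \<bar>f x\<bar> * \<bar>g x\<bar>" by simp
    ultimately show "norm (f x * g x) \<le> norm ((f x)\<^sup>2 + (g x)\<^sup>2)"
      by linarith
  qed
qed

locale ddd = prob_space M for M :: "'a measure" +
  fixes T :: nat and SS :: "enat set" and S :: "'a \<Rightarrow> enat" and Q :: "'a \<Rightarrow> nat"
  assumes finSS: "finite SS"
  and S_meas[measurable]: "S \<in> M \<rightarrow>\<^sub>M count_space UNIV"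
  and Q_meas[measurable]: "Q \<in> M \<rightarrow>\<^sub>M count_space UNIV"
  and S_val: "\<forall>w\<in>space M. S w \<in> SS" and Q_val: "\<forall>w\<in>space M. Q w \<in> {0,1}"
begin

definition sqi :: "(nat \<Rightarrow> 'a \<Rightarrow> real) \<Rightarrow> bool" where
  "sqi X \<longleftrightarrow> (\<forall>t\<in>{1..T}. X t \<in> borel_measurable M \<and> integrable M (\<lambda>w. (X t w)\<^sup>2))"

definition ip :: "(nat \<Rightarrow> 'a \<Rightarrow> real) \<Rightarrow> (nat \<Rightarrow> 'a \<Rightarrow> real) \<Rightarrow> real" where
  "ip X Y = (\<integral>w. (\<Sum>t\<in>{1..T}. X t w * Y t w) \<partial>M)"

definition vfun :: "int set \<Rightarrow> ('a \<Rightarrow> real) \<Rightarrow> (enat \<Rightarrow> nat \<Rightarrow> real) \<Rightarrow> (nat \<Rightarrow> nat \<Rightarrow> real)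
   \<Rightarrow> (int \<Rightarrow> real) \<Rightarrow> nat \<Rightarrow> 'a \<Rightarrow> real" where
  "vfun E a d h b t w = a w + d (S w) t + h (Q w) t + (\<Sum>e\<in>E. b e * Rev S Q e t w)"

definition orth :: "int set \<Rightarrow> (nat \<Rightarrow> 'a \<Rightarrow> real) \<Rightarrow> bool" where
  "orth E r \<longleftrightarrow> (\<forall>a d h b. unit_effect M a \<longrightarrow> ip r (vfun E a d h b) = 0)"

lemma sqiD: "sqi X \<Longrightarrow> t \<in> {1..T} \<Longrightarrow> X t \<in> borel_measurable M"
    "sqi X \<Longrightarrow> t \<in> {1..T} \<Longrightarrow> integrable M (\<lambda>w. (X t w)\<^sup>2)"
  by (auto simp: sqi_def)

lemma sqi_int_mult: "sqi X \<Longrightarrow> sqi Y \<Longrightarrow> t \<in> {1..T} \<Longrightarrow> integrable M (\<lambda>w. X t w * Y t w)"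
  by (rule sq_int_mult) (auto simp: sqi_def)

lemma sq_int_int:
  fixes f :: "'a \<Rightarrow> real"
  assumes "f \<in> borel_measurable M" "integrable M (\<lambda>w. (f w)\<^sup>2)"
  shows "integrable M f"
  using sq_int_mult[OF assms(1) borel_measurable_const[of 1] assms(2)] by simp

lemma sqi_int: "sqi X \<Longrightarrow> t \<in> {1..T} \<Longrightarrow> integrable M (X t)"
  using sq_int_int[of "X t"] by (auto simp: sqi_def)

lemma sqi_cong: assumes "\<And>t w. t \<in> {1..T} \<Longrightarrow> w \<in> space M \<Longrightarrow> X t w = Y t w" shows "sqi X = sqi Y"
  unfolding sqi_def
proof (intro ball_cong refl conj_cong)
  fix t assume t: "t \<in> {1..T}"
  show "(X t \<in> borel_measurable M) = (Y t \<in> borel_measurable M)"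
    by (rule measurable_cong) (use assms t in auto)
  show "integrable M (\<lambda>w. (X t w)\<^sup>2) = integrable M (\<lambda>w. (Y t w)\<^sup>2)"
    by (rule Bochner_Integration.integrable_cong) (use assms t in auto)
qed

lemma sqi_add: "sqi X \<Longrightarrow> sqi Y \<Longrightarrow> sqi (\<lambda>t w. X t w + Y t w)"
proof -
  assume a: "sqi X" "sqi Y"
  show ?thesis unfolding sqi_def
  proof
    fix t assume t: "t \<in> {1..T}"
    have m: "X t \<in> borel_measurable M" "Y t \<in> borel_measurable M" using a t by (auto simp: sqi_def)
    have "integrable M (\<lambda>w. (X t w)\<^sup>2 + (Y t w)\<^sup>2 + 2 * (X t w * Y t w))"
      using a t sqi_int_mult[OF a(1) a(2) t] by (auto simp: sqi_def)
    then have "integrable M (\<lambda>w. (X t w + Y t w)\<^sup>2)"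
      by (simp add: power2_sum algebra_simps)
    then show "(\<lambda>w. X t w + Y t w) \<in> borel_measurable M \<and> integrable M (\<lambda>w. (X t w + Y t w)\<^sup>2)"
      using m by auto
  qed
qed

lemma sqi_scale: "sqi X \<Longrightarrow> sqi (\<lambda>t w. c * X t w)"
  by (auto simp: sqi_def power_mult_distrib)

lemma sqi_diff: "sqi X \<Longrightarrow> sqi Y \<Longrightarrow> sqi (\<lambda>t w. X t w - Y t w)"
  using sqi_add[of X "\<lambda>t w. (-1) * Y t w"] sqi_scale[of Y "-1"] by simp

lemma sqi_zero: "sqi (\<lambda>t w. 0)"
  by (auto simp: sqi_def)

lemma sqi_sum: "finite I \<Longrightarrow> (\<And>i. i \<in> I \<Longrightarrow> sqi (G i)) \<Longrightarrow> sqi (\<lambda>t w. \<Sum>i\<in>I. G i t w)"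
proof (induction I rule: finite_induct)
  case empty then show ?case by (simp add: sqi_zero)
next
  case (insert x F)
  then show ?case using sqi_add[of "G x" "\<lambda>t w. \<Sum>i\<in>F. G i t w"] by simp
qed

lemma sqi_lin: "finite I \<Longrightarrow> (\<And>i. i \<in> I \<Longrightarrow> sqi (G i)) \<Longrightarrow> sqi (\<lambda>t w. \<Sum>i\<in>I. c i * G i t w)"
  by (rule sqi_sum) (auto intro: sqi_scale)

lemma sqi_unit: "unit_effect M a \<Longrightarrow> sqi (\<lambda>t w. a w)"
  by (auto simp: sqi_def unit_effect_def)

lemma cell_bound:
  assumes w: "w \<in> space M"
  shows "\<bar>f (S w) (Q w)\<bar> \<le> (\<Sum>s\<in>SS. \<Sum>q\<in>{0,1::nat}. \<bar>f s q :: real\<bar>)"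
proof -
  have s: "S w \<in> SS" and q: "Q w \<in> {0,1}" using w S_val Q_val by auto
  have "\<bar>f (S w) (Q w)\<bar> \<le> (\<Sum>q\<in>{0,1::nat}. \<bar>f (S w) q\<bar>)"
    by (rule member_le_sum[OF q, of "\<lambda>q. \<bar>f (S w) q\<bar>"]) auto
  also have "\<dots> \<le> (\<Sum>s\<in>SS. \<Sum>q\<in>{0,1::nat}. \<bar>f s q\<bar>)"
    by (rule member_le_sum[OF s, of "\<lambda>s. \<Sum>q\<in>{0,1::nat}. \<bar>f s q\<bar>"]) (auto intro: sum_nonneg finSS)
  finally show ?thesis .
qed

lemma unit_cell: "unit_effect M (\<lambda>w. f (S w) (Q w))"
proof -
  let ?B = "(\<Sum>s\<in>SS. \<Sum>q\<in>{0,1::nat}. \<bar>f s q :: real\<bar>)"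
  have "integrable M (\<lambda>w. (f (S w) (Q w))\<^sup>2)"
  proof (rule integrable_const_bound[where B="?B\<^sup>2"])
    show "AE x in M. norm ((f (S x) (Q x))\<^sup>2) \<le> ?B\<^sup>2"
    proof (intro AE_I2)
      fix x assume x: "x \<in> space M"
      have "\<bar>f (S x) (Q x)\<bar> \<le> ?B" by (rule cell_bound[OF x])
      then have "\<bar>f (S x) (Q x)\<bar>\<^sup>2 \<le> ?B\<^sup>2" by (rule power_mono) simp
      then show "norm ((f (S x) (Q x))\<^sup>2) \<le> ?B\<^sup>2" by simp
    qed
    show "(\<lambda>x. (f (S x) (Q x))\<^sup>2) \<in> borel_measurable M" by measurable
  qed
  then show ?thesis unfolding unit_effect_def by (auto)
qed

lemma sqi_cell: "sqi (\<lambda>t w. f (S w) (Q w) t)"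
  using unit_cell[of "\<lambda>s q. f s q t" for t] by (auto simp: sqi_def unit_effect_def)

lemma Rev_cell: "Rev S Q e t w = (\<lambda>s q. if (\<exists>g. s = enat g \<and> int t - int g = e) \<and> q = 1 then 1 else 0) (S w) (Q w)"
  by (simp add: Rev_def)

lemma sqi_Rev: "sqi (Rev S Q e)"
  unfolding Rev_cell by (rule sqi_cell)

lemma sqi_vfun: "finite E \<Longrightarrow> unit_effect M a \<Longrightarrow> sqi (vfun E a d h b)"
proof -
  assume E: "finite E" and a: "unit_effect M a"
  have "sqi (\<lambda>t w. a w + (d (S w) t + h (Q w) t + (\<Sum>e\<in>E. b e * Rev S Q e t w)))"
    apply (rule sqi_add[OF sqi_unit[OF a]])
    apply (rule sqi_add[OF sqi_add])
      apply (rule sqi_cell[of "\<lambda>s q t. d s t"])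
     apply (rule sqi_cell[of "\<lambda>s q t. h q t"])
    apply (rule sqi_lin[OF E sqi_Rev])
    done
  then show ?thesis unfolding vfun_def by (simp add: add.assoc)
qed

end

context ddd begin

lemma unit_add: "unit_effect M a \<Longrightarrow> unit_effect M b \<Longrightarrow> unit_effect M (\<lambda>w. a w + b w)"
proof -
  assume a: "unit_effect M a" "unit_effect M b"
  have "integrable M (\<lambda>w. (a w)\<^sup>2 + (b w)\<^sup>2 + 2 * (a w * b w))"
    using a sq_int_mult[of a M b] by (auto simp: unit_effect_def)
  then have "integrable M (\<lambda>w. (a w + b w)\<^sup>2)"
    by (simp add: power2_sum algebra_simps)
  then show ?thesis using a by (auto simp: unit_effect_def)
qed

lemma unit_scale: "unit_effect M a \<Longrightarrow> unit_effect M (\<lambda>w. c * a w)"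
  by (auto simp: unit_effect_def power_mult_distrib)

lemma unit_diff: "unit_effect M a \<Longrightarrow> unit_effect M b \<Longrightarrow> unit_effect M (\<lambda>w. a w - b w)"
  using unit_add[of a "\<lambda>w. (-1) * b w"] unit_scale[of b "-1"] by simp

lemma unit_zero: "unit_effect M (\<lambda>w. 0)"
  by (auto simp: unit_effect_def)

lemma unit_sum: "finite I \<Longrightarrow> (\<And>i. i \<in> I \<Longrightarrow> unit_effect M (a i)) \<Longrightarrow> unit_effect M (\<lambda>w. \<Sum>i\<in>I. a i w)"
proof (induction I rule: finite_induct)
  case empty then show ?case by (simp add: unit_zero)
next
  case (insert x F)
  then show ?case using unit_add[of "a x" "\<lambda>w. \<Sum>i\<in>F. a i w"] by simp
qed

lemma unit_lin: "finite I \<Longrightarrow> (\<And>i. i \<in> I \<Longrightarrow> unit_effect M (a i)) \<Longrightarrow> unit_effect M (\<lambda>w. \<Sum>i\<in>I. c i * a i w)"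
  by (rule unit_sum) (auto intro: unit_scale)

lemma unit_of_sqi: "sqi X \<Longrightarrow> t \<in> {1..T} \<Longrightarrow> unit_effect M (X t)"
  by (auto simp: sqi_def unit_effect_def)

lemma unit_cong: "(\<And>w. w \<in> space M \<Longrightarrow> a w = b w) \<Longrightarrow> unit_effect M a = unit_effect M b"
  unfolding unit_effect_def
  apply (intro conj_cong)
   apply (rule measurable_cong, simp)
  apply (rule Bochner_Integration.integrable_cong, auto)
  done

lemma ip_cong:
  assumes "\<And>t w. t \<in> {1..T} \<Longrightarrow> w \<in> space M \<Longrightarrow> X t w = X' t w"
    "\<And>t w. t \<in> {1..T} \<Longrightarrow> w \<in> space M \<Longrightarrow> Y t w = Y' t w"
  shows "ip X Y = ip X' Y'"
  unfolding ip_def by (rule Bochner_Integration.integral_cong) (auto simp: assms intro!: sum.cong)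

lemma ip_sym: "ip X Y = ip Y X"
  unfolding ip_def by (simp add: mult.commute)

lemma ip_int: "sqi X \<Longrightarrow> sqi Y \<Longrightarrow> integrable M (\<lambda>w. \<Sum>t\<in>{1..T}. X t w * Y t w)"
  by (auto intro!: integrable_sum sqi_int_mult)

lemma ip_add_left: "sqi X \<Longrightarrow> sqi X' \<Longrightarrow> sqi Y \<Longrightarrow>
   ip (\<lambda>t w. X t w + X' t w) Y = ip X Y + ip X' Y"
proof -
  assume a: "sqi X" "sqi X'" "sqi Y"
  have "ip (\<lambda>t w. X t w + X' t w) Y = (\<integral>w. (\<Sum>t\<in>{1..T}. X t w * Y t w) + (\<Sum>t\<in>{1..T}. X' t w * Y t w) \<partial>M)"
    unfolding ip_def by (rule Bochner_Integration.integral_cong) (simp_all add: sum.distrib distrib_right)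
  also have "\<dots> = ip X Y + ip X' Y"
    unfolding ip_def by (rule Bochner_Integration.integral_add[OF ip_int[OF a(1,3)] ip_int[OF a(2,3)]])
  finally show ?thesis .
qed

lemma ip_scale_left: "ip (\<lambda>t w. c * X t w) Y = c * ip X Y"
proof -
  have "\<And>w. (\<Sum>t\<in>{1..T}. c * X t w * Y t w) = c * (\<Sum>t\<in>{1..T}. X t w * Y t w)"
    by (simp add: sum_distrib_left mult.assoc)
  then show ?thesis unfolding ip_def by simp
qed

lemma ip_diff_left: "sqi X \<Longrightarrow> sqi X' \<Longrightarrow> sqi Y \<Longrightarrow>
   ip (\<lambda>t w. X t w - X' t w) Y = ip X Y - ip X' Y"
  using ip_add_left[of X "\<lambda>t w. (-1) * X' t w" Y] ip_scale_left[of "-1" X' Y] sqi_scale[of X' "-1"]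
  by simp

lemma ip_sum_left: "finite I \<Longrightarrow> (\<And>i. i \<in> I \<Longrightarrow> sqi (G i)) \<Longrightarrow> sqi Y \<Longrightarrow>
   ip (\<lambda>t w. \<Sum>i\<in>I. G i t w) Y = (\<Sum>i\<in>I. ip (G i) Y)"
proof (induction I rule: finite_induct)
  case empty then show ?case by (simp add: ip_def)
next
  case (insert x F)
  have "ip (\<lambda>t w. \<Sum>i\<in>insert x F. G i t w) Y = ip (\<lambda>t w. G x t w + (\<Sum>i\<in>F. G i t w)) Y"
    using insert by simp
  also have "\<dots> = ip (G x) Y + ip (\<lambda>t w. \<Sum>i\<in>F. G i t w) Y"
    using insert by (intro ip_add_left sqi_sum) auto
  finally show ?case using insert by simp
qed

lemma ip_lin_left: "finite I \<Longrightarrow> (\<And>i. i \<in> I \<Longrightarrow> sqi (G i)) \<Longrightarrow> sqi Y \<Longrightarrow>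
   ip (\<lambda>t w. \<Sum>i\<in>I. c i * G i t w) Y = (\<Sum>i\<in>I. c i * ip (G i) Y)"
  using ip_sum_left[of I "\<lambda>i t w. c i * G i t w" Y] by (simp add: sqi_scale ip_scale_left)

lemma ip_nonneg: "0 \<le> ip X X"
  unfolding ip_def by (rule Bochner_Integration.integral_nonneg) (simp add: sum_nonneg)

lemma ip_zero_AE:
  assumes Z: "sqi Z" and z: "ip Z Z = 0" and t: "t \<in> {1..T}"
  shows "AE w in M. Z t w = 0"
proof -
  have "AE w in M. (\<Sum>t\<in>{1..T}. Z t w * Z t w) = 0"
    using z unfolding ip_def
    by (subst (asm) integral_nonneg_eq_0_iff_AE[OF ip_int[OF Z Z]]) (simp_all add: sum_nonneg)
  then show ?thesis
  proof (rule AE_mp, intro AE_I2 impI)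
    fix w assume "(\<Sum>t\<in>{1..T}. Z t w * Z t w) = 0"
    then have "\<forall>t\<in>{1..T}. Z t w * Z t w = 0"
      by (subst (asm) sum_nonneg_eq_0_iff) auto
    then show "Z t w = 0" using t by auto
  qed
qed

lemma ip_null:
  assumes Z: "sqi Z" and z: "ip Z Z = 0" and Y: "sqi Y"
  shows "ip Z Y = 0"
proof -
  have "AE w in M. \<forall>t\<in>{1..T}. Z t w = 0"
    using ip_zero_AE[OF Z z] by (subst AE_finite_all) auto
  then have "AE w in M. (\<Sum>t\<in>{1..T}. Z t w * Y t w) = 0"
    by eventually_elim auto
  then have "ip Z Y = (\<integral>w. 0 \<partial>M)"
    unfolding ip_def
    by (intro integral_cong_AE) (auto intro!: borel_measurable_sum borel_measurable_times sqiD[OF Z] sqiD[OF Y])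
  then show ?thesis by simp
qed

end

context ddd begin

lemma ip_add_right: "sqi X \<Longrightarrow> sqi Y \<Longrightarrow> sqi Y' \<Longrightarrow>
   ip X (\<lambda>t w. Y t w + Y' t w) = ip X Y + ip X Y'"
  using ip_add_left[of Y Y' X] by (simp add: ip_sym)

lemma ip_diff_right: "sqi X \<Longrightarrow> sqi Y \<Longrightarrow> sqi Y' \<Longrightarrow>
   ip X (\<lambda>t w. Y t w - Y' t w) = ip X Y - ip X Y'"
  using ip_diff_left[of Y Y' X] by (simp add: ip_sym)

lemma ip_square_add: "sqi X \<Longrightarrow> sqi Y \<Longrightarrow>
   ip (\<lambda>t w. X t w + Y t w) (\<lambda>t w. X t w + Y t w) = ip X X + 2 * ip X Y + ip Y Y"
proof -
  assume a: "sqi X" "sqi Y"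
  have s: "sqi (\<lambda>t w. X t w + Y t w)" using a by (rule sqi_add)
  show ?thesis
    using ip_add_left[OF a s] ip_add_right[OF a(1) a] ip_add_right[OF a(2) a] ip_sym[of X Y]
    by simp
qed

lemma ls_obj_ip: "ls_obj M T S Q E X a d h b = ip (\<lambda>t w. X t w - vfun E a d h b t w) (\<lambda>t w. X t w - vfun E a d h b t w)"
  unfolding ls_obj_def ip_def vfun_def
  by (rule Bochner_Integration.integral_cong) (simp_all add: power2_eq_square diff_diff_eq)

lemma vfun_diff: "vfun E a d h b t w - vfun E a' d' h' b' t w =
   vfun E (\<lambda>w. a w - a' w) (\<lambda>s t. d s t - d' s t) (\<lambda>q t. h q t - h' q t) (\<lambda>e. b e - b' e) t w"
  unfolding vfun_def by (simp add: sum_subtractf[symmetric] left_diff_distrib)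

lemma pythag:
  assumes E: "finite E" and X: "sqi X" and a: "unit_effect M a" and a': "unit_effect M a'"
    and o: "orth E (\<lambda>t w. X t w - vfun E a d h b t w)"
  shows "ls_obj M T S Q E X a' d' h' b' =
     ls_obj M T S Q E X a d h b +
     ip (vfun E (\<lambda>w. a w - a' w) (\<lambda>s t. d s t - d' s t) (\<lambda>q t. h q t - h' q t) (\<lambda>e. b e - b' e))
        (vfun E (\<lambda>w. a w - a' w) (\<lambda>s t. d s t - d' s t) (\<lambda>q t. h q t - h' q t) (\<lambda>e. b e - b' e))"
proof -
  let ?r = "\<lambda>t w. X t w - vfun E a d h b t w"
  let ?v = "vfun E (\<lambda>w. a w - a' w) (\<lambda>s t. d s t - d' s t) (\<lambda>q t. h q t - h' q t) (\<lambda>e. b e - b' e)"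
  have ua: "unit_effect M (\<lambda>w. a w - a' w)" using a a' by (rule unit_diff)
  have sr: "sqi ?r" using X sqi_vfun[OF E a] by (rule sqi_diff)
  have sv: "sqi ?v" using sqi_vfun[OF E ua] .
  have eq: "\<And>t w. X t w - vfun E a' d' h' b' t w = ?r t w + ?v t w"
    using vfun_diff[of E a d h b _ _ a' d' h' b'] by (simp add: algebra_simps)
  have "ls_obj M T S Q E X a' d' h' b' = ip (\<lambda>t w. ?r t w + ?v t w) (\<lambda>t w. ?r t w + ?v t w)"
    unfolding ls_obj_ip eq ..
  also have "\<dots> = ip ?r ?r + 2 * ip ?r ?v + ip ?v ?v" by (rule ip_square_add[OF sr sv])
  finally have 1: "ls_obj M T S Q E X a' d' h' b' = ip ?r ?r + 2 * ip ?r ?v + ip ?v ?v" .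
  have 2: "ip ?r ?v = 0" using o ua unfolding orth_def by blast
  have 3: "ls_obj M T S Q E X a d h b = ip ?r ?r" by (rule ls_obj_ip)
  show ?thesis using 1 2 3 by linarith
qed

lemma orth_is_min:
  assumes E: "finite E" and X: "sqi X" and a: "unit_effect M a"
    and o: "orth E (\<lambda>t w. X t w - vfun E a d h b t w)"
  shows "is_ls_min M T S Q E X a d h b"
  unfolding is_ls_min_def
proof (intro conjI allI impI)
  fix a' d' h' b' assume a': "unit_effect M a'"
  note p = pythag[OF E X a a' o, where d'=d' and h'=h' and b'=b']
  note n = ip_nonneg[of "vfun E (\<lambda>w. a w - a' w) (\<lambda>s t. d s t - d' s t) (\<lambda>q t. h q t - h' q t) (\<lambda>e. b e - b' e)"]
  show "ls_obj M T S Q E X a d h b \<le> ls_obj M T S Q E X a' d' h' b'"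
    using p n by linarith
qed (rule a)

lemma orth_uniq:
  assumes E: "finite E" and X: "sqi X" and a: "unit_effect M a"
    and o: "orth E (\<lambda>t w. X t w - vfun E a d h b t w)"
    and m: "is_ls_min M T S Q E X a' d' h' b'"
  shows "ip (vfun E (\<lambda>w. a w - a' w) (\<lambda>s t. d s t - d' s t) (\<lambda>q t. h q t - h' q t) (\<lambda>e. b e - b' e))
        (vfun E (\<lambda>w. a w - a' w) (\<lambda>s t. d s t - d' s t) (\<lambda>q t. h q t - h' q t) (\<lambda>e. b e - b' e)) = 0"
proof -
  have a': "unit_effect M a'" using m by (simp add: is_ls_min_def)
  have "ls_obj M T S Q E X a' d' h' b' \<le> ls_obj M T S Q E X a d h b"
    using m a by (simp add: is_ls_min_def)
  moreover note pythag[OF E X a a' o, where d'=d' and h'=h' and b'=b']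
  moreover note ip_nonneg[of "vfun E (\<lambda>w. a w - a' w) (\<lambda>s t. d s t - d' s t) (\<lambda>q t. h q t - h' q t) (\<lambda>e. b e - b' e)"]
  ultimately show ?thesis by linarith
qed

end

context ddd begin

lemma ip_lin_right: "finite I \<Longrightarrow> (\<And>i. i \<in> I \<Longrightarrow> sqi (G i)) \<Longrightarrow> sqi Y \<Longrightarrow>
   ip Y (\<lambda>t w. \<Sum>i\<in>I. c i * G i t w) = (\<Sum>i\<in>I. c i * ip Y (G i))"
  using ip_lin_left[of I G Y c] by (simp add: ip_sym)

lemma proj_exists:
  assumes "finite I" "\<And>i. i \<in> I \<Longrightarrow> sqi (G i)" "sqi X"
  shows "\<exists>\<theta>. \<forall>j\<in>I. ip (\<lambda>t w. X t w - (\<Sum>i\<in>I. \<theta> i * G i t w)) (G j) = 0"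
  using assms
proof (induction I arbitrary: X rule: finite_induct)
  case empty then show ?case by simp
next
  case (insert n I)
  have GI: "\<And>i. i \<in> I \<Longrightarrow> sqi (G i)" and Gn: "sqi (G n)" using insert by auto
  obtain \<theta> where th: "\<forall>j\<in>I. ip (\<lambda>t w. X t w - (\<Sum>i\<in>I. \<theta> i * G i t w)) (G j) = 0"
    using insert.IH[OF GI insert.prems(2)] by blast
  obtain \<phi> where ph: "\<forall>j\<in>I. ip (\<lambda>t w. G n t w - (\<Sum>i\<in>I. \<phi> i * G i t w)) (G j) = 0"
    using insert.IH[OF GI Gn] by blast
  define r where "r = (\<lambda>t w. X t w - (\<Sum>i\<in>I. \<theta> i * G i t w))"
  define u where "u = (\<lambda>t w. G n t w - (\<Sum>i\<in>I. \<phi> i * G i t w))"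
  have sr: "sqi r" unfolding r_def by (intro sqi_diff sqi_lin insert GI)
  have su: "sqi u" unfolding u_def by (intro sqi_diff sqi_lin Gn insert GI)
  have rI: "\<forall>j\<in>I. ip r (G j) = 0" using th r_def by simp
  have uI: "\<forall>j\<in>I. ip u (G j) = 0" using ph u_def by simp
  have Gn_eq: "G n = (\<lambda>t w. u t w + (\<Sum>i\<in>I. \<phi> i * G i t w))" unfolding u_def by simp
  have ip_Gn: "ip Y (G n) = ip Y u + (\<Sum>i\<in>I. \<phi> i * ip Y (G i))" if Y: "sqi Y" for Y
  proof -
    have "ip Y (G n) = ip Y (\<lambda>t w. u t w + (\<Sum>i\<in>I. \<phi> i * G i t w))" by (subst Gn_eq) (rule refl)
    also have "\<dots> = ip Y u + ip Y (\<lambda>t w. \<Sum>i\<in>I. \<phi> i * G i t w)"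
      by (rule ip_add_right[OF Y su]) (intro sqi_lin insert GI)
    also have "ip Y (\<lambda>t w. \<Sum>i\<in>I. \<phi> i * G i t w) = (\<Sum>i\<in>I. \<phi> i * ip Y (G i))"
      by (rule ip_lin_right[OF insert(1) GI Y])
    finally show ?thesis .
  qed
  show ?case
  proof (cases "ip u u = 0")
    case True
    define \<theta>' where "\<theta>' = \<theta>(n := 0)"
    have s: "\<And>t w. (\<Sum>i\<in>insert n I. \<theta>' i * G i t w) = (\<Sum>i\<in>I. \<theta> i * G i t w)"
      using insert(1,2) unfolding \<theta>'_def by (simp add: sum.insert) (rule sum.cong, auto)
    have "\<forall>j\<in>insert n I. ip r (G j) = 0"
    proof
      fix j assume "j \<in> insert n I"
      then show "ip r (G j) = 0"
      proof
        assume j: "j = n"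
        have "ip r u = 0" using ip_null[OF su True sr] by (simp add: ip_sym)
        then show ?thesis using j ip_Gn[OF sr] rI by simp
      qed (use rI in auto)
    qed
    then have "\<forall>j\<in>insert n I. ip (\<lambda>t w. X t w - (\<Sum>i\<in>insert n I. \<theta>' i * G i t w)) (G j) = 0"
      unfolding s r_def .
    then show ?thesis by blast
  next
    case False
    define l where "l = ip r u / ip u u"
    define \<theta>' where "\<theta>' = (\<lambda>i. if i = n then l else \<theta> i - l * \<phi> i)"
    have s: "\<And>t w. X t w - (\<Sum>i\<in>insert n I. \<theta>' i * G i t w) = r t w - l * u t w"
    proof -
      fix t w
      have "(\<Sum>i\<in>insert n I. \<theta>' i * G i t w) = l * G n t w + (\<Sum>i\<in>I. (\<theta> i - l * \<phi> i) * G i t w)"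
        using insert(1,2) unfolding \<theta>'_def by (simp add: sum.insert) (rule sum.cong, auto)
      also have "(\<Sum>i\<in>I. (\<theta> i - l * \<phi> i) * G i t w) = (\<Sum>i\<in>I. \<theta> i * G i t w) - l * (\<Sum>i\<in>I. \<phi> i * G i t w)"
        by (simp add: left_diff_distrib sum_subtractf sum_distrib_left mult.assoc)
      finally show "X t w - (\<Sum>i\<in>insert n I. \<theta>' i * G i t w) = r t w - l * u t w"
        unfolding r_def u_def by (simp add: algebra_simps)
    qed
    have slu: "sqi (\<lambda>t w. l * u t w)" by (rule sqi_scale[OF su])
    have r'G: "ip (\<lambda>t w. r t w - l * u t w) Y = ip r Y - l * ip u Y" if Y: "sqi Y" for Y
      using ip_diff_left[OF sr slu Y] ip_scale_left[of l u Y] by simp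
    have sr': "sqi (\<lambda>t w. r t w - l * u t w)" by (rule sqi_diff[OF sr slu])
    have "\<forall>j\<in>insert n I. ip (\<lambda>t w. r t w - l * u t w) (G j) = 0"
    proof
      fix j assume "j \<in> insert n I"
      then show "ip (\<lambda>t w. r t w - l * u t w) (G j) = 0"
      proof
        assume j: "j = n"
        have "ip (\<lambda>t w. r t w - l * u t w) u = ip r u - l * ip u u" by (rule r'G[OF su])
        also have "\<dots> = 0" unfolding l_def using False by simp
        finally have 0: "ip (\<lambda>t w. r t w - l * u t w) u = 0" .
        have "\<forall>i\<in>I. ip (\<lambda>t w. r t w - l * u t w) (G i) = 0"
          using rI uI r'G GI by simp
        then show ?thesis using j ip_Gn[OF sr'] 0 by simp
      next
        assume "j \<in> I"
        then show ?thesis using rI uI r'G GI by simp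
      qed
    qed
    then have "\<forall>j\<in>insert n I. ip (\<lambda>t w. X t w - (\<Sum>i\<in>insert n I. \<theta>' i * G i t w)) (G j) = 0"
      unfolding s .
    then show ?thesis by blast
  qed
qed

end

datatype gidx = GD enat nat | GH nat nat | GR int

context ddd begin

definition gcell :: "gidx \<Rightarrow> enat \<Rightarrow> nat \<Rightarrow> nat \<Rightarrow> real" where
  "gcell i s q t = (case i of GD s' \<tau> \<Rightarrow> if s = s' \<and> t = \<tau> then 1 else 0
     | GH q' \<tau> \<Rightarrow> if q = q' \<and> t = \<tau> then 1 else 0
     | GR e \<Rightarrow> if (\<exists>g. s = enat g \<and> int t - int g = e) \<and> q = 1 then 1 else 0)"

definition gen :: "gidx \<Rightarrow> nat \<Rightarrow> 'a \<Rightarrow> real" where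
  "gen i t w = gcell i (S w) (Q w) t"

definition gset :: "int set \<Rightarrow> gidx set" where
  "gset E = (\<lambda>(s,\<tau>). GD s \<tau>) ` (SS \<times> {1..T}) \<union> (\<lambda>(q,\<tau>). GH q \<tau>) ` ({0,1} \<times> {1..T}) \<union> GR ` E"

lemma finite_gset: "finite E \<Longrightarrow> finite (gset E)"
  unfolding gset_def using finSS by auto

lemma sqi_gen: "sqi (gen i)"
  unfolding gen_def by (rule sqi_cell[of "gcell i"])

lemma gen_simps: "gen (GD s \<tau>) t w = (if S w = s \<and> t = \<tau> then 1 else 0)"
   "gen (GH q \<tau>) t w = (if Q w = q \<and> t = \<tau> then 1 else 0)"
   "gen (GR e) t w = Rev S Q e t w"
  by (auto simp: gen_def gcell_def Rev_def)

lemma gsum: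
  assumes E: "finite E" and w: "w \<in> space M" and t: "t \<in> {1..T}"
  shows "(\<Sum>i\<in>gset E. c i * gen i t w) = c (GD (S w) t) + c (GH (Q w) t) + (\<Sum>e\<in>E. c (GR e) * Rev S Q e t w)"
proof -
  let ?A = "(\<lambda>(s,\<tau>). GD s \<tau>) ` (SS \<times> {1..T})"
  let ?B = "(\<lambda>(q,\<tau>). GH q \<tau>) ` ({0::nat,1} \<times> {1..T})"
  let ?C = "GR ` E"
  have fA: "finite ?A" and fB: "finite ?B" and fC: "finite ?C" using finSS E by auto
  have sw: "S w \<in> SS" and qw: "Q w \<in> {0,1}" using w S_val Q_val by auto
  have "(\<Sum>i\<in>gset E. c i * gen i t w) = (\<Sum>i\<in>?A. c i * gen i t w) + (\<Sum>i\<in>?B. c i * gen i t w) + (\<Sum>i\<in>?C. c i * gen i t w)"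
    unfolding gset_def
    by (subst sum.union_disjoint; (use fA fB fC in auto)?)+
  also have "(\<Sum>i\<in>?A. c i * gen i t w) = (\<Sum>x\<in>SS \<times> {1..T}. c (GD (fst x) (snd x)) * (if x = (S w, t) then 1 else 0))"
    by (subst sum.reindex) (auto simp: inj_on_def gen_simps intro!: sum.cong)
  also have "\<dots> = c (GD (S w) t)"
    using sw t finSS by (simp add: if_distrib[of "\<lambda>x. _ * x"] cong: if_cong) 
  also have "(\<Sum>i\<in>?B. c i * gen i t w) = (\<Sum>x\<in>{0::nat,1} \<times> {1..T}. c (GH (fst x) (snd x)) * (if x = (Q w, t) then 1 else 0))"
    by (subst sum.reindex) (auto simp: inj_on_def gen_simps intro!: sum.cong)
  also have "\<dots> = c (GH (Q w) t)"
    using qw t by (simp add: if_distrib[of "\<lambda>x. _ * x"] cong: if_cong) 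
  also have "(\<Sum>i\<in>?C. c i * gen i t w) = (\<Sum>e\<in>E. c (GR e) * Rev S Q e t w)"
    by (subst sum.reindex) (auto simp: inj_on_def gen_simps)
  finally show ?thesis .
qed

end

context ddd begin

definition mean :: "(nat \<Rightarrow> 'a \<Rightarrow> real) \<Rightarrow> 'a \<Rightarrow> real" where
  "mean Y w = (\<Sum>t\<in>{1..T}. Y t w) / real T"

definition dm :: "(nat \<Rightarrow> 'a \<Rightarrow> real) \<Rightarrow> nat \<Rightarrow> 'a \<Rightarrow> real" where
  "dm Y t w = Y t w - mean Y w"

lemma unit_mean: "sqi Y \<Longrightarrow> unit_effect M (mean Y)"
proof -
  assume Y: "sqi Y"
  have "unit_effect M (\<lambda>w. \<Sum>t\<in>{1..T}. (1 / real T) * Y t w)"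
    by (rule unit_lin) (auto intro: unit_of_sqi[OF Y])
  moreover have "(\<lambda>w. \<Sum>t\<in>{1..T}. (1 / real T) * Y t w) = mean Y"
    by (auto simp: mean_def sum_divide_distrib)
  ultimately show ?thesis by simp
qed

lemma sqi_dm: "sqi Y \<Longrightarrow> sqi (dm Y)"
  unfolding dm_def by (intro sqi_diff sqi_unit unit_mean)

lemma dm_sum0: "(\<Sum>t\<in>{1..T}. dm Y t w) = 0"
proof (cases "T = 0")
  case True then show ?thesis by simp
next
  case False
  then show ?thesis unfolding dm_def mean_def by (simp add: sum_subtractf)
qed

lemma mean_lin: "mean (\<lambda>t w. X t w - (\<Sum>i\<in>I. \<theta> i * G i t w)) w = mean X w - (\<Sum>i\<in>I. \<theta> i * mean (G i) w)"
  unfolding mean_def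
  by (simp add: sum_subtractf sum.swap[of _ I] sum_distrib_left diff_divide_distrib sum_divide_distrib)

lemma dm_lin: "dm (\<lambda>t w. X t w - (\<Sum>i\<in>I. \<theta> i * G i t w)) t w = dm X t w - (\<Sum>i\<in>I. \<theta> i * dm (G i) t w)"
  unfolding dm_def mean_lin by (simp add: right_diff_distrib sum_subtractf)

lemma ip_unit_sum0: "(\<And>w. (\<Sum>t\<in>{1..T}. r t w) = 0) \<Longrightarrow> ip r (\<lambda>t w. a w) = 0"
  unfolding ip_def by (simp add: sum_distrib_right[symmetric])

lemma orth_suff:
  assumes E: "finite E" and r: "sqi r" and s0: "\<And>w. (\<Sum>t\<in>{1..T}. r t w) = 0"
    and g0: "\<And>j. j \<in> gset E \<Longrightarrow> ip r (gen j) = 0"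
  shows "orth E r"
  unfolding orth_def
proof (intro allI impI)
  fix a :: "'a \<Rightarrow> real" and d :: "enat \<Rightarrow> nat \<Rightarrow> real" and h :: "nat \<Rightarrow> nat \<Rightarrow> real" and b :: "int \<Rightarrow> real"
  assume a: "unit_effect M a"
  define c where "c = case_gidx d h b"
  have eq: "vfun E a d h b t w = a w + (\<Sum>i\<in>gset E. c i * gen i t w)"
    if "t \<in> {1..T}" "w \<in> space M" for t w
    using gsum[OF E that(2) that(1), of c] unfolding vfun_def c_def by simp
  have "ip r (vfun E a d h b) = ip r (\<lambda>t w. a w + (\<Sum>i\<in>gset E. c i * gen i t w))"
    by (rule ip_cong) (auto simp: eq)
  also have "\<dots> = ip r (\<lambda>t w. a w) + ip r (\<lambda>t w. \<Sum>i\<in>gset E. c i * gen i t w)"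
    by (intro ip_add_right r sqi_unit a sqi_lin finite_gset E sqi_gen)
  also have "ip r (\<lambda>t w. \<Sum>i\<in>gset E. c i * gen i t w) = (\<Sum>i\<in>gset E. c i * ip r (gen i))"
    by (intro ip_lin_right finite_gset E sqi_gen r)
  also have "\<dots> = 0" using g0 by simp
  finally show "ip r (vfun E a d h b) = 0" using ip_unit_sum0[OF s0] by simp
qed

lemma orth_cong:
  assumes "\<And>t w. t \<in> {1..T} \<Longrightarrow> w \<in> space M \<Longrightarrow> r t w = r' t w"
  shows "orth E r = orth E r'"
  unfolding orth_def using ip_cong[of r r' "vfun E _ _ _ _"] assms by auto

lemma exists_orth:
  assumes E: "finite E" and X: "sqi X"
  shows "\<exists>a d h b. unit_effect M a \<and> orth E (\<lambda>t w. X t w - vfun E a d h b t w)"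
proof -
  let ?I = "gset E"
  have fI: "finite ?I" by (rule finite_gset[OF E])
  obtain \<theta> where th: "\<forall>j\<in>?I. ip (\<lambda>t w. dm X t w - (\<Sum>i\<in>?I. \<theta> i * dm (gen i) t w)) (dm (gen j)) = 0"
    using proj_exists[OF fI, of "\<lambda>i. dm (gen i)" "dm X"] sqi_dm[OF sqi_gen] sqi_dm[OF X] by blast
  define Y where "Y = (\<lambda>t w. X t w - (\<Sum>i\<in>?I. \<theta> i * gen i t w))"
  define r where "r = dm Y"
  have sY: "sqi Y" unfolding Y_def by (intro sqi_diff X sqi_lin fI sqi_gen)
  have sr: "sqi r" unfolding r_def by (rule sqi_dm[OF sY])
  have r_eq: "r = (\<lambda>t w. dm X t w - (\<Sum>i\<in>?I. \<theta> i * dm (gen i) t w))"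
    unfolding r_def Y_def by (intro ext dm_lin)
  have g0: "ip r (gen j) = 0" if j: "j \<in> ?I" for j
  proof -
    have "gen j = (\<lambda>t w. dm (gen j) t w + mean (gen j) w)" by (simp add: dm_def)
    then have "ip r (gen j) = ip r (\<lambda>t w. dm (gen j) t w + mean (gen j) w)" by simp
    also have "\<dots> = ip r (dm (gen j)) + ip r (\<lambda>t w. mean (gen j) w)"
      by (intro ip_add_right sr sqi_dm sqi_gen sqi_unit unit_mean)
    also have "ip r (dm (gen j)) = 0" using th j r_eq by simp
    also have "ip r (\<lambda>t w. mean (gen j) w) = 0"
      by (rule ip_unit_sum0) (unfold r_def, rule dm_sum0)
    finally show ?thesis by simp
  qed
  have o: "orth E r"
    by (rule orth_suff[OF E sr _ g0]) (unfold r_def, rule dm_sum0)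
  define a where "a = mean Y"
  define d where "d = (\<lambda>s t. \<theta> (GD s t))"
  define h where "h = (\<lambda>q t. \<theta> (GH q t))"
  define b where "b = (\<lambda>e. \<theta> (GR e))"
  have req: "X t w - vfun E a d h b t w = r t w" if "t \<in> {1..T}" "w \<in> space M" for t w
  proof -
    have "(\<Sum>i\<in>?I. \<theta> i * gen i t w) = d (S w) t + h (Q w) t + (\<Sum>e\<in>E. b e * Rev S Q e t w)"
      using gsum[OF E that(2) that(1), of \<theta>] unfolding d_def h_def b_def .
    then have Yt: "Y t w = X t w - (d (S w) t + h (Q w) t + (\<Sum>e\<in>E. b e * Rev S Q e t w))"
      unfolding Y_def by simp
    show ?thesis unfolding vfun_def r_def dm_def a_def Yt by simp
  qed
  have "orth E (\<lambda>t w. X t w - vfun E a d h b t w)"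
    using o orth_cong[of "\<lambda>t w. X t w - vfun E a d h b t w" r E] req by simp
  moreover have "unit_effect M a" unfolding a_def by (rule unit_mean[OF sY])
  ultimately show ?thesis by blast
qed

end

context ddd begin

lemma ls_obj_empty_b: "ls_obj M T S Q {} X a d h b = ls_obj M T S Q {} X a d h b'"
  by (simp add: ls_obj_def)

lemma vfun_empty_b: "vfun {} a d h b = vfun {} a d h b'"
  by (simp add: vfun_def fun_eq_iff)

definition fep :: "(nat \<Rightarrow> 'a \<Rightarrow> real) \<Rightarrow> ('a \<Rightarrow> real) \<times> (enat \<Rightarrow> nat \<Rightarrow> real) \<times> (nat \<Rightarrow> nat \<Rightarrow> real)" where
  "fep X = (SOME p. is_ls_min M T S Q {} X (fst p) (fst (snd p)) (snd (snd p)) (\<lambda>_. 0))"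

lemma fe_resid_eq: "fe_resid M T S Q X = (\<lambda>t w. X t w - vfun {} (fst (fep X)) (fst (snd (fep X))) (snd (snd (fep X))) (\<lambda>_. 0) t w)"
  unfolding fe_resid_def fep_def Let_def vfun_def by (simp add: fun_eq_iff)

lemma fe_props:
  assumes X: "sqi X"
  shows "unit_effect M (fst (fep X))" "orth {} (fe_resid M T S Q X)" "sqi (fe_resid M T S Q X)"
proof -
  obtain a d h b where a: "unit_effect M a" and o: "orth {} (\<lambda>t w. X t w - vfun {} a d h b t w)"
    using exists_orth[OF _ X, of "{}"] by auto
  have "is_ls_min M T S Q {} X a d h b" by (rule orth_is_min[OF _ X a o]) simp
  then have "is_ls_min M T S Q {} X a d h (\<lambda>_. 0)"
    unfolding is_ls_min_def using ls_obj_empty_b by metis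
  then have "\<exists>p. is_ls_min M T S Q {} X (fst p) (fst (snd p)) (snd (snd p)) (\<lambda>_. 0)"
    by (intro exI[of _ "(a, d, h)"]) simp
  then have m: "is_ls_min M T S Q {} X (fst (fep X)) (fst (snd (fep X))) (snd (snd (fep X))) (\<lambda>_. 0)"
    unfolding fep_def by (rule someI_ex)
  then show ua: "unit_effect M (fst (fep X))" by (simp add: is_ls_min_def)
  let ?a = "fst (fep X)" and ?d = "fst (snd (fep X))" and ?h = "snd (snd (fep X))"
  let ?V = "vfun {} (\<lambda>w. a w - ?a w) (\<lambda>s t. d s t - ?d s t) (\<lambda>q t. h q t - ?h q t) (\<lambda>e. b e - 0)"
  have V0: "ip ?V ?V = 0" by (rule orth_uniq[OF _ X a o m]) simp
  have sV: "sqi ?V" by (intro sqi_vfun unit_diff a ua) simp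
  let ?r = "\<lambda>t w. X t w - vfun {} a d h b t w"
  have sr: "sqi ?r" by (intro sqi_diff X sqi_vfun a) simp
  have eq: "fe_resid M T S Q X = (\<lambda>t w. ?r t w + ?V t w)"
    unfolding fe_resid_eq by (simp add: vfun_def fun_eq_iff)
  show "sqi (fe_resid M T S Q X)" unfolding eq by (rule sqi_add[OF sr sV])
  show "orth {} (fe_resid M T S Q X)"
    unfolding orth_def
  proof (intro allI impI)
    fix a' :: "'a \<Rightarrow> real" and d' :: "enat \<Rightarrow> nat \<Rightarrow> real" and h' :: "nat \<Rightarrow> nat \<Rightarrow> real" and b' :: "int \<Rightarrow> real"
    assume a': "unit_effect M a'"
    have sv: "sqi (vfun {} a' d' h' b')" by (intro sqi_vfun a') simp
    have "ip (fe_resid M T S Q X) (vfun {} a' d' h' b') = ip ?r (vfun {} a' d' h' b') + ip ?V (vfun {} a' d' h' b')"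
      unfolding eq by (rule ip_add_left[OF sr sV sv])
    also have "ip ?r (vfun {} a' d' h' b') = 0" using o a' unfolding orth_def by blast
    also have "ip ?V (vfun {} a' d' h' b') = 0" by (rule ip_null[OF sV V0 sv])
    finally show "ip (fe_resid M T S Q X) (vfun {} a' d' h' b') = 0" by simp
  qed
qed

lemma gram_kernel:
  assumes E: "finite E" and a0: "unit_effect M a0" and Z: "sqi Z" and Z0: "ip Z Z = 0"
    and eq: "\<And>t w. t \<in> {1..T} \<Longrightarrow> w \<in> space M \<Longrightarrow>
       (\<Sum>e\<in>E. c e * Rev S Q e t w) = vfun {} a0 dz hz (\<lambda>_. 0) t w + Z t w"
  shows "\<forall>e\<in>E. (\<Sum>e'\<in>E. demeaned_gram M T S Q e e' * c e') = 0"
proof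
  fix e assume e: "e \<in> E"
  define R where "R = (\<lambda>e. fe_resid M T S Q (Rev S Q e))"
  define A where "A = (\<lambda>e. fst (fep (Rev S Q e)))"
  define D where "D = (\<lambda>e. fst (snd (fep (Rev S Q e))))"
  define H where "H = (\<lambda>e. snd (snd (fep (Rev S Q e))))"
  have sR: "\<And>e. sqi (R e)" and oR: "\<And>e. orth {} (R e)" and uA: "\<And>e. unit_effect M (A e)"
    unfolding R_def A_def using fe_props[OF sqi_Rev] by auto
  have Req: "R e t w = Rev S Q e t w - vfun {} (A e) (D e) (H e) (\<lambda>_. 0) t w" for e t w
    unfolding R_def A_def D_def H_def fe_resid_eq by simp
  define a1 where "a1 = (\<lambda>w. a0 w - (\<Sum>e'\<in>E. c e' * A e' w))"
  define d1 where "d1 = (\<lambda>s t. dz s t - (\<Sum>e'\<in>E. c e' * D e' s t))"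
  define h1 where "h1 = (\<lambda>q t. hz q t - (\<Sum>e'\<in>E. c e' * H e' q t))"
  have ua1: "unit_effect M a1" unfolding a1_def by (intro unit_diff a0 unit_lin E uA)
  have sv: "sqi (vfun {} a1 d1 h1 (\<lambda>_. 0))" by (intro sqi_vfun ua1) simp
  have peq: "(\<Sum>e'\<in>E. c e' * R e' t w) = vfun {} a1 d1 h1 (\<lambda>_. 0) t w + Z t w"
    if "t \<in> {1..T}" "w \<in> space M" for t w
  proof -
    have "(\<Sum>e'\<in>E. c e' * R e' t w) = (\<Sum>e'\<in>E. c e' * Rev S Q e' t w) - (\<Sum>e'\<in>E. c e' * vfun {} (A e') (D e') (H e') (\<lambda>_. 0) t w)"
      unfolding Req by (simp add: right_diff_distrib sum_subtractf)
    also have "(\<Sum>e'\<in>E. c e' * vfun {} (A e') (D e') (H e') (\<lambda>_. 0) t w)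
        = (\<Sum>e'\<in>E. c e' * A e' w) + (\<Sum>e'\<in>E. c e' * D e' (S w) t) + (\<Sum>e'\<in>E. c e' * H e' (Q w) t)"
      unfolding vfun_def by (simp add: distrib_left sum.distrib)
    finally show ?thesis unfolding eq[OF that] by (simp add: vfun_def a1_def d1_def h1_def)
  qed
  have "(\<Sum>e'\<in>E. demeaned_gram M T S Q e e' * c e') = (\<Sum>e'\<in>E. c e' * ip (R e) (R e'))"
    unfolding demeaned_gram_def R_def ip_def by (simp add: mult.commute)
  also have "\<dots> = ip (R e) (\<lambda>t w. \<Sum>e'\<in>E. c e' * R e' t w)"
    by (rule ip_lin_right[symmetric]) (auto intro: E sR)
  also have "\<dots> = ip (R e) (\<lambda>t w. vfun {} a1 d1 h1 (\<lambda>_. 0) t w + Z t w)"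
    by (rule ip_cong) (auto simp: peq)
  also have "\<dots> = ip (R e) (vfun {} a1 d1 h1 (\<lambda>_. 0)) + ip (R e) Z"
    by (rule ip_add_right[OF sR sv Z])
  also have "ip (R e) (vfun {} a1 d1 h1 (\<lambda>_. 0)) = 0" using oR ua1 unfolding orth_def by blast
  also have "ip (R e) Z = 0" using ip_null[OF Z Z0 sR] by (simp add: ip_sym)
  finally show "(\<Sum>e'\<in>E. demeaned_gram M T S Q e e' * c e') = 0" by simp
qed

lemma pop_coef_eq:
  assumes E: "finite E" and X: "sqi X" and a: "unit_effect M a"
    and o: "orth E (\<lambda>t w. X t w - vfun E a d h b t w)"
    and ns: "nonsingular_on E (demeaned_gram M T S Q)"
  shows "\<forall>j\<in>E. pop_coef M T S Q E X j = b j"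
proof -
  have "\<exists>b. \<exists>a d h. is_ls_min M T S Q E X a d h b"
    using orth_is_min[OF E X a o] by blast
  then have "\<exists>a d h. is_ls_min M T S Q E X a d h (pop_coef M T S Q E X)"
    unfolding pop_coef_def by (rule someI_ex)
  then obtain a2 d2 h2 where m: "is_ls_min M T S Q E X a2 d2 h2 (pop_coef M T S Q E X)" by blast
  let ?b2 = "pop_coef M T S Q E X"
  have a2: "unit_effect M a2" using m by (simp add: is_ls_min_def)
  let ?V = "vfun E (\<lambda>w. a w - a2 w) (\<lambda>s t. d s t - d2 s t) (\<lambda>q t. h q t - h2 q t) (\<lambda>e. b e - ?b2 e)"
  have V0: "ip ?V ?V = 0" by (rule orth_uniq[OF E X a o m])
  have sV: "sqi ?V" by (intro sqi_vfun unit_diff a a2 E)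
  have ua: "unit_effect M (\<lambda>w. - (a w - a2 w))" using unit_scale[OF unit_diff[OF a a2], of "-1"] by simp
  have "\<forall>e\<in>E. (\<Sum>e'\<in>E. demeaned_gram M T S Q e e' * (b e' - ?b2 e')) = 0"
    by (rule gram_kernel[OF E ua sV V0, where dz="\<lambda>s t. - (d s t - d2 s t)" and hz="\<lambda>q t. - (h q t - h2 q t)"])
       (simp add: vfun_def)
  moreover have "(\<forall>e\<in>E. (\<Sum>e'\<in>E. demeaned_gram M T S Q e e' * (b e' - ?b2 e')) = 0) \<longrightarrow> (\<forall>e\<in>E. b e - ?b2 e = 0)"
    using ns unfolding nonsingular_on_def by (rule spec)
  ultimately have "\<forall>e\<in>E. b e - ?b2 e = 0" by blast
  then show ?thesis by simp
qed

end

context ddd begin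

definition cset :: "enat \<Rightarrow> nat \<Rightarrow> 'a set" where
  "cset s q = {w \<in> space M. S w = s \<and> Q w = q}"

lemma cset_sets[measurable]: "cset s q \<in> sets M"
  unfolding cset_def by measurable

lemma int_ind: "integrable M (f :: 'a \<Rightarrow> real) \<Longrightarrow> integrable M (\<lambda>w. indicator (cset s q) w * f w)"
  using integrable_mult_indicator[OF cset_sets, of f s q] by simp

lemma ip_cell0:
  assumes r: "sqi r"
    and c0: "\<And>s q t. s \<in> SS \<Longrightarrow> q \<in> {0,1} \<Longrightarrow> t \<in> {1..T} \<Longrightarrow> (\<integral>w. indicator (cset s q) w * r t w \<partial>M) = 0"
  shows "ip r (\<lambda>t w. f (S w) (Q w) t) = 0"
proof -
  have pt: "r t w * f (S w) (Q w) t = (\<Sum>s\<in>SS. \<Sum>q\<in>{0,1::nat}. f s q t * (indicator (cset s q) w * r t w))"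
    if w: "w \<in> space M" for t w
  proof -
    have sw: "S w \<in> SS" and qw: "Q w \<in> {0,1}" using w S_val Q_val by auto
    have "(\<Sum>s\<in>SS. \<Sum>q\<in>{0,1::nat}. f s q t * (indicator (cset s q) w * r t w))
        = (\<Sum>s\<in>SS. if s = S w then (\<Sum>q\<in>{0,1::nat}. if q = Q w then f s q t * r t w else 0) else 0)"
      by (intro sum.cong refl) (auto simp: cset_def w split: split_indicator)
    also have "\<dots> = f (S w) (Q w) t * r t w"
      using sw qw finSS by (simp add: sum.delta')
    finally show ?thesis by simp
  qed
  have ii: "integrable M (\<lambda>w. f s q t * (indicator (cset s q) w * r t w))" if "t \<in> {1..T}" for s q t
    using int_ind[OF sqi_int[OF r that]] by simp
  have "ip r (\<lambda>t w. f (S w) (Q w) t) = (\<integral>w. (\<Sum>t\<in>{1..T}. \<Sum>s\<in>SS. \<Sum>q\<in>{0,1::nat}. f s q t * (indicator (cset s q) w * r t w)) \<partial>M)"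
    unfolding ip_def by (rule Bochner_Integration.integral_cong) (simp_all add: pt)
  also have "\<dots> = (\<Sum>t\<in>{1..T}. \<Sum>s\<in>SS. \<Sum>q\<in>{0,1::nat}. f s q t * (\<integral>w. indicator (cset s q) w * r t w \<partial>M))"
    using ii by (simp add: Bochner_Integration.integral_sum integrable_sum)
  also have "\<dots> = 0"
    using c0 by (intro sum.neutral ballI) auto
  finally show ?thesis .
qed

lemma orth_dm_cell0:
  assumes E: "finite E" and Z: "sqi Z"
    and c0: "\<And>s q t. s \<in> SS \<Longrightarrow> q \<in> {0,1} \<Longrightarrow> t \<in> {1..T} \<Longrightarrow> (\<integral>w. indicator (cset s q) w * Z t w \<partial>M) = 0"
  shows "orth E (dm Z)"
proof (rule orth_suff[OF E sqi_dm[OF Z]])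
  show "\<And>w. (\<Sum>t\<in>{1..T}. dm Z t w) = 0" by (rule dm_sum0)
  have c0': "(\<integral>w. indicator (cset s q) w * dm Z t w \<partial>M) = 0"
    if "s \<in> SS" "q \<in> {0,1}" "t \<in> {1..T}" for s q t
  proof -
    have i: "\<And>t. t \<in> {1..T} \<Longrightarrow> integrable M (\<lambda>w. indicator (cset s q) w * Z t w)"
      by (rule int_ind[OF sqi_int[OF Z]])
    have "(\<integral>w. indicator (cset s q) w * dm Z t w \<partial>M) =
        (\<integral>w. indicator (cset s q) w * Z t w - (\<Sum>\<tau>\<in>{1..T}. indicator (cset s q) w * Z \<tau> w) / real T \<partial>M)"
      by (rule Bochner_Integration.integral_cong[OF refl])
         (simp only: dm_def mean_def right_diff_distrib sum_distrib_left times_divide_eq_right)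
    also have "\<dots> = (\<integral>w. indicator (cset s q) w * Z t w \<partial>M) - (\<integral>w. (\<Sum>\<tau>\<in>{1..T}. indicator (cset s q) w * Z \<tau> w) / real T \<partial>M)"
      by (rule Bochner_Integration.integral_diff[OF i[OF that(3)]]) (intro Bochner_Integration.integrable_divide Bochner_Integration.integrable_sum i, assumption)
    also have "(\<integral>w. (\<Sum>\<tau>\<in>{1..T}. indicator (cset s q) w * Z \<tau> w) / real T \<partial>M)
        = (\<Sum>\<tau>\<in>{1..T}. (\<integral>w. indicator (cset s q) w * Z \<tau> w \<partial>M)) / real T"
      by (simp only: integral_divide_zero) (rule arg_cong[where f="\<lambda>x. x / real T"], rule Bochner_Integration.integral_sum, rule i)
    finally show ?thesis using c0 that by simp
  qed
  show "\<And>j. j \<in> gset E \<Longrightarrow> ip (dm Z) (gen j) = 0"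
    unfolding gen_def by (rule ip_cell0[OF sqi_dm[OF Z] c0'])
qed

lemma orth_add: "finite E \<Longrightarrow> sqi r1 \<Longrightarrow> sqi r2 \<Longrightarrow> orth E r1 \<Longrightarrow> orth E r2 \<Longrightarrow> orth E (\<lambda>t w. r1 t w + r2 t w)"
  unfolding orth_def by (simp add: ip_add_left sqi_vfun)

lemma orth_lin: "finite E \<Longrightarrow> finite I \<Longrightarrow> (\<And>i. i \<in> I \<Longrightarrow> sqi (r i)) \<Longrightarrow> (\<And>i. i \<in> I \<Longrightarrow> orth E (r i))
   \<Longrightarrow> orth E (\<lambda>t w. \<Sum>i\<in>I. c i * r i t w)"
  unfolding orth_def by (simp add: ip_lin_left sqi_vfun)

end

context ddd begin

lemma finite_window: "finite (event_window L K)"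
  unfolding event_window_def by simp

lemma inf_in_SS:
  assumes SS_sub: "SS \<subseteq> enat ` {2..T} \<union> {\<infinity>}"
    and window: "\<forall>g\<in>Gtrg SS. \<forall>t\<in>{1..T}. - int L \<le> int t - int g \<and> int t - int g \<le> int K"
    and gram: "nonsingular_on (event_window L K) (demeaned_gram M T S Q)"
  shows "\<infinity> \<in> SS"
proof (rule ccontr)
  assume ninf: "\<infinity> \<notin> SS"
  let ?E = "event_window L K"
  define c where "c = (\<lambda>e::int. real_of_int e + 1)"
  define a0 where "a0 = (\<lambda>s (q::nat). if q = 1 then - real (the_enat s) else 0)"
  define hz where "hz = (\<lambda>(q::nat) (t::nat). if q = 1 then real t + 1 else (0::real))"
  have eq: "(\<Sum>e\<in>?E. c e * Rev S Q e t w) = vfun {} (\<lambda>w. a0 (S w) (Q w)) (\<lambda>s t. 0) hz (\<lambda>_. 0) t w + 0"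
    if t: "t \<in> {1..T}" and w: "w \<in> space M" for t w
  proof -
    have "S w \<in> SS" using w S_val by auto
    then obtain g where g: "S w = enat g" "g \<in> Gtrg SS" using ninf SS_sub
      by (cases "S w") (auto simp: Gtrg_def)
    have win: "- int L \<le> int t - int g" "int t - int g \<le> int K" using window g(2) t by auto
    show ?thesis
    proof (cases "Q w = 1")
      case True
      have "(\<Sum>e\<in>?E. c e * Rev S Q e t w) = (\<Sum>e\<in>?E. if int t - int g = e then c e else 0)"
        by (intro sum.cong refl) (auto simp: Rev_def g True)
      also have "\<dots> = (if int t - int g \<in> ?E then c (int t - int g) else 0)"
        using finite_window by (simp add: sum.delta)
      also have "\<dots> = - real g + (real t + 1)"
        using win by (auto simp: event_window_def c_def)
      finally show ?thesis by (simp add: vfun_def a0_def hz_def g True)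
    next
      case False
      then show ?thesis by (simp add: vfun_def a0_def hz_def Rev_def)
    qed
  qed
  have "\<forall>e\<in>?E. (\<Sum>e'\<in>?E. demeaned_gram M T S Q e e' * c e') = 0"
    by (rule gram_kernel[OF finite_window unit_cell sqi_zero _ eq]) (simp add: ip_def)
  moreover have "(\<forall>e\<in>?E. (\<Sum>e'\<in>?E. demeaned_gram M T S Q e e' * c e') = 0) \<longrightarrow> (\<forall>e\<in>?E. c e = 0)"
    using gram unfolding nonsingular_on_def by (rule spec)
  ultimately have "c 0 = 0" by (auto simp: event_window_def)
  then show False by (simp add: c_def)
qed

end

context ddd begin

lemma cond_mean_diff:
  assumes "integrable M f" "integrable M g"
  shows "cond_mean M (cset s q) (\<lambda>w. f w - g w) = cond_mean M (cset s q) f - cond_mean M (cset s q) g"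
proof -
  have "(\<integral>w. indicator (cset s q) w * (f w - g w) \<partial>M) =
      (\<integral>w. indicator (cset s q) w * f w - indicator (cset s q) w * g w \<partial>M)"
    by (simp add: right_diff_distrib)
  also have "\<dots> = (\<integral>w. indicator (cset s q) w * f w \<partial>M) - (\<integral>w. indicator (cset s q) w * g w \<partial>M)"
    by (rule Bochner_Integration.integral_diff[OF int_ind[OF assms(1)] int_ind[OF assms(2)]])
  finally show ?thesis unfolding cond_mean_def by (simp add: diff_divide_distrib)
qed

lemma yinf_decomp:
  assumes inf: "\<infinity> \<in> SS"
    and cells_pos: "\<forall>s\<in>SS. \<forall>q\<in>{0, 1}. measure M {w \<in> space M. S w = s \<and> Q w = q} > 0"
    and mom_inf: "\<forall>t\<in>{1..T}. Yinf t \<in> borel_measurable M \<and> integrable M (\<lambda>w. (Yinf t w)\<^sup>2)"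
    and ddd_pct: "\<forall>g\<in>Gtrg SS. \<forall>gc\<in>SS. \<forall>t\<in>{2..T}. enat g < gc \<and> enat t \<le> gc \<longrightarrow>
        Delta M S Q Yinf t (enat g) 1 - Delta M S Q Yinf t (enat g) 0
          = Delta M S Q Yinf t gc 1 - Delta M S Q Yinf t gc 0"
  shows "\<exists>k d0 h0. \<forall>s\<in>SS. \<forall>q\<in>{0,1}. \<forall>t\<in>{1..T}.
      (\<integral>w. indicator (cset s q) w * Yinf t w \<partial>M) = measure M (cset s q) * (k s q + d0 s t + h0 q t)"
proof -
  define m where "m = (\<lambda>s q t. cond_mean M (cset s q) (Yinf t))"
  define df where "df = (\<lambda>s t. m s 1 t - m s 0 t)"
  have iY: "\<And>t. t \<in> {1..T} \<Longrightarrow> integrable M (Yinf t)"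
    using mom_inf sq_int_int by blast
  have Dm: "Delta M S Q Yinf t s q = m s q t - m s q (t - 1)" if "t \<in> {2..T}" for t s q
  proof -
    have "Delta M S Q Yinf t s q = cond_mean M (cset s q) (\<lambda>w. Yinf t w - Yinf (t - 1) w)"
      unfolding Delta_def cset_def ..
    also have "\<dots> = m s q t - m s q (t - 1)"
      unfolding m_def by (rule cond_mean_diff) (use that in \<open>auto intro!: iY\<close>)
    finally show ?thesis .
  qed
  have key: "df s t - df s 1 = df \<infinity> t - df \<infinity> 1" if s: "s \<in> SS" and t: "t \<in> {1..T}" for s t
  proof (cases "s = \<infinity>")
    case True then show ?thesis by simp
  next
    case False
    then obtain g where g: "s = enat g" "g \<in> Gtrg SS" using s by (cases s) (auto simp: Gtrg_def)
    have "1 \<le> t \<longrightarrow> t \<le> T \<longrightarrow> df s t - df s 1 = df \<infinity> t - df \<infinity> 1"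
    proof (induction t)
      case 0 then show ?case by simp
    next
      case (Suc n)
      show ?case
      proof (cases "n = 0")
        case True then show ?thesis by simp
      next
        case False
        show ?thesis
        proof (intro impI)
          assume le: "Suc n \<le> T"
          have IH: "df s n - df s 1 = df \<infinity> n - df \<infinity> 1" using Suc.IH False le by simp
          have tt: "Suc n \<in> {2..T}" using False le by simp
          have "Delta M S Q Yinf (Suc n) (enat g) 1 - Delta M S Q Yinf (Suc n) (enat g) 0
              = Delta M S Q Yinf (Suc n) \<infinity> 1 - Delta M S Q Yinf (Suc n) \<infinity> 0"
            using ddd_pct g(2) inf tt by auto
          then have "df s (Suc n) - df s n = df \<infinity> (Suc n) - df \<infinity> n"
            unfolding Dm[OF tt] df_def g(1) by simp
          then show "df s (Suc n) - df s 1 = df \<infinity> (Suc n) - df \<infinity> 1" using IH by simp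
        qed
      qed
    qed
    then show ?thesis using t by simp
  qed
  define k where "k = (\<lambda>s (q::nat). if q = 1 then df s 1 else 0)"
  define d0 where "d0 = (\<lambda>s t. m s 0 t)"
  define h0 where "h0 = (\<lambda>(q::nat) t. if q = 1 then df \<infinity> t - df \<infinity> 1 else 0)"
  have "\<forall>s\<in>SS. \<forall>q\<in>{0,1}. \<forall>t\<in>{1..T}.
      (\<integral>w. indicator (cset s q) w * Yinf t w \<partial>M) = measure M (cset s q) * (k s q + d0 s t + h0 q t)"
  proof (intro ballI)
    fix s q t assume s: "s \<in> SS" and q: "q \<in> {0::nat,1}" and t: "t \<in> {1..T}"
    have pos: "measure M (cset s q) > 0" using cells_pos s q unfolding cset_def by auto
    have mv: "m s q t = k s q + d0 s t + h0 q t"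
      using q key[OF s t] by (auto simp: k_def d0_def h0_def df_def)
    have "(\<integral>w. indicator (cset s q) w * Yinf t w \<partial>M) = measure M (cset s q) * m s q t"
      using pos by (simp add: m_def cond_mean_def)
    then show "(\<integral>w. indicator (cset s q) w * Yinf t w \<partial>M) = measure M (cset s q) * (k s q + d0 s t + h0 q t)"
      using mv by simp
  qed
  then show ?thesis by blast
qed

end

context ddd begin

lemma sqi_cellmult:
  assumes X: "sqi X" and b: "\<And>s q t. \<bar>f s q t\<bar> \<le> 1"
  shows "sqi (\<lambda>t w. f (S w) (Q w) t * X t w)"
  unfolding sqi_def
proof
  fix t assume t: "t \<in> {1..T}"
  have m: "X t \<in> borel_measurable M" using X t by (simp add: sqi_def)
  have mm: "(\<lambda>w. f (S w) (Q w) t * X t w) \<in> borel_measurable M"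
    using m by measurable
  have "integrable M (\<lambda>w. (f (S w) (Q w) t * X t w)\<^sup>2)"
  proof (rule Bochner_Integration.integrable_bound[where f="\<lambda>w. (X t w)\<^sup>2"])
    show "integrable M (\<lambda>w. (X t w)\<^sup>2)" using X t by (simp add: sqi_def)
    show "(\<lambda>w. (f (S w) (Q w) t * X t w)\<^sup>2) \<in> borel_measurable M" using mm by measurable
    show "AE x in M. norm ((f (S x) (Q x) t * X t x)\<^sup>2) \<le> norm ((X t x)\<^sup>2)"
    proof (intro AE_I2)
      fix x
      have "\<bar>f (S x) (Q x) t\<bar>\<^sup>2 \<le> 1" using b[of "S x" "Q x" t] by (simp add: abs_square_le_1)
      then have "(f (S x) (Q x) t)\<^sup>2 * (X t x)\<^sup>2 \<le> 1 * (X t x)\<^sup>2"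
        by (intro mult_right_mono) auto
      then show "norm ((f (S x) (Q x) t * X t x)\<^sup>2) \<le> norm ((X t x)\<^sup>2)"
        by (simp add: power_mult_distrib)
    qed
  qed
  then show "(\<lambda>w. f (S w) (Q w) t * X t w) \<in> borel_measurable M \<and> integrable M (\<lambda>w. (f (S w) (Q w) t * X t w)\<^sup>2)"
    using mm by simp
qed

lemma sqi_Rgl: "sqi (Rgl S Q g l)"
proof -
  have "Rgl S Q g l = (\<lambda>t w. (\<lambda>s q t. if s = enat g \<and> q = 1 \<and> t = g + l then 1 else 0) (S w) (Q w) t)"
    by (simp add: Rgl_def fun_eq_iff)
  then show ?thesis using sqi_cell by simp
qed

lemma sqi_Yobs:
  assumes fG: "finite (Gtrg SS)"
    and mom_inf: "\<forall>t\<in>{1..T}. Yinf t \<in> borel_measurable M \<and> integrable M (\<lambda>w. (Yinf t w)\<^sup>2)"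
    and mom_pot: "\<forall>g\<in>Gtrg SS. \<forall>t\<in>{1..T}.
                    Ypot g t \<in> borel_measurable M \<and> integrable M (\<lambda>w. (Ypot g t w)\<^sup>2)"
  shows "sqi (Yobs S Q Yinf Ypot)"
proof -
  have sI: "sqi Yinf" using mom_inf by (simp add: sqi_def)
  have sP: "\<And>g. g \<in> Gtrg SS \<Longrightarrow> sqi (Ypot g)" using mom_pot by (simp add: sqi_def)
  have s: "sqi (\<lambda>t w. Yinf t w + (\<Sum>g\<in>Gtrg SS. (\<lambda>s q t. if s = enat g \<and> q = 1 then 1 else 0) (S w) (Q w) t * (Ypot g t w - Yinf t w)))"
    by (intro sqi_add sI sqi_sum fG sqi_cellmult sqi_diff sP) auto
  have "Yobs S Q Yinf Ypot t w = Yinf t w + (\<Sum>g\<in>Gtrg SS. (\<lambda>s q t. if s = enat g \<and> q = 1 then 1 else 0) (S w) (Q w) t * (Ypot g t w - Yinf t w))"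
    if w: "w \<in> space M" for t w
  proof (cases "S w")
    case (enat g)
    have g: "g \<in> Gtrg SS" using S_val w enat by (auto simp: Gtrg_def)
    have "(\<Sum>g'\<in>Gtrg SS. (if S w = enat g' \<and> Q w = 1 then 1 else 0) * (Ypot g' t w - Yinf t w))
        = (\<Sum>g'\<in>Gtrg SS. if g' = g then (if Q w = 1 then Ypot g t w - Yinf t w else 0) else 0)"
      by (intro sum.cong refl) (auto simp: enat)
    also have "\<dots> = (if Q w = 1 then Ypot g t w - Yinf t w else 0)"
      using fG g by (simp add: sum.delta)
    finally show ?thesis by (simp add: Yobs_def enat)
  next
    case infinity
    then show ?thesis by (simp add: Yobs_def)
  qed
  then show ?thesis using s sqi_cong by (metis (no_types, lifting))
qed

end

context ddd begin

lemma rho_eval: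
  assumes fG: "finite (Gtrg SS)" and g: "g \<in> Gtrg SS" and t: "t \<in> {1..T}"
    and window: "\<forall>g\<in>Gtrg SS. \<forall>t\<in>{1..T}. - int L \<le> int t - int g \<and> int t - int g \<le> int K"
  shows "(\<Sum>p\<in>Gtrg SS \<times> {0..K}. C p * (if enat g = enat (fst p) \<and> t = fst p + snd p then 1 else 0))
     = (if g \<le> t then C (g, t - g) else (0::real))"
proof -
  have "(\<Sum>p\<in>Gtrg SS \<times> {0..K}. C p * (if enat g = enat (fst p) \<and> t = fst p + snd p then 1 else 0))
      = (\<Sum>p\<in>Gtrg SS \<times> {0..K}. if (g, t - g) = p \<and> g \<le> t then C p else 0)"
    by (intro sum.cong refl) auto
  also have "\<dots> = (if g \<le> t then (\<Sum>p\<in>Gtrg SS \<times> {0..K}. if (g, t - g) = p then C p else 0) else 0)"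
    by simp
  also have "\<dots> = (if g \<le> t then C (g, t - g) else 0)"
  proof (cases "g \<le> t")
    case True
    have "t - g \<le> K" using window g t True by force
    then have "(g, t - g) \<in> Gtrg SS \<times> {0..K}" using g by simp
    then show ?thesis using True fG by (simp add: sum.delta)
  qed simp
  finally show ?thesis .
qed

lemma Yobs_cell:
  assumes cells_pos: "\<forall>s\<in>SS. \<forall>q\<in>{0, 1}. measure M {w \<in> space M. S w = s \<and> Q w = q} > 0"
    and mom_inf: "\<forall>t\<in>{1..T}. Yinf t \<in> borel_measurable M \<and> integrable M (\<lambda>w. (Yinf t w)\<^sup>2)"
    and mom_pot: "\<forall>g\<in>Gtrg SS. \<forall>t\<in>{1..T}.
                    Ypot g t \<in> borel_measurable M \<and> integrable M (\<lambda>w. (Ypot g t w)\<^sup>2)"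
    and no_antic: "\<forall>g\<in>Gtrg SS. \<forall>t. 1 \<le> t \<and> t < g \<longrightarrow> (AE w in M. Ypot g t w = Yinf t w)"
    and s: "s \<in> SS" and q: "q \<in> {0,1}" and t: "t \<in> {1..T}"
  shows "(\<integral>w. indicator (cset s q) w * Yobs S Q Yinf Ypot t w \<partial>M)
     = (\<integral>w. indicator (cset s q) w * Yinf t w \<partial>M) +
       (if (\<exists>g. s = enat g \<and> g \<le> t) \<and> q = 1 then measure M (cset s q) * CATT M S Q Yinf Ypot (the_enat s) (t - the_enat s) else 0)"
proof (cases "\<exists>g. s = enat g \<and> q = 1")
  case True
  then obtain g where sg: "s = enat g" and q1: "q = 1" by auto
  have g: "g \<in> Gtrg SS" using s sg by (simp add: Gtrg_def)
  have iI: "integrable M (Yinf t)" using mom_inf t sq_int_int by blast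
  have iP: "integrable M (Ypot g t)" using mom_pot t g sq_int_int by blast
  have "(\<integral>w. indicator (cset s q) w * Yobs S Q Yinf Ypot t w \<partial>M)
      = (\<integral>w. indicator (cset s q) w * Yinf t w + indicator (cset s q) w * (Ypot g t w - Yinf t w) \<partial>M)"
    by (rule Bochner_Integration.integral_cong[OF refl]) (auto simp: cset_def Yobs_def sg q1 split: split_indicator)
  also have "\<dots> = (\<integral>w. indicator (cset s q) w * Yinf t w \<partial>M) + (\<integral>w. indicator (cset s q) w * (Ypot g t w - Yinf t w) \<partial>M)"
    by (rule Bochner_Integration.integral_add[OF int_ind[OF iI] int_ind]) (intro Bochner_Integration.integrable_diff iP iI)
  also have "(\<integral>w. indicator (cset s q) w * (Ypot g t w - Yinf t w) \<partial>M)
      = (if g \<le> t then measure M (cset s q) * CATT M S Q Yinf Ypot g (t - g) else 0)"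
  proof (cases "g \<le> t")
    case True
    have pos: "measure M (cset s q) > 0" using cells_pos s q unfolding cset_def by auto
    have "CATT M S Q Yinf Ypot g (t - g) = (\<integral>w. indicator (cset s q) w * (Ypot g t w - Yinf t w) \<partial>M) / measure M (cset s q)"
      unfolding CATT_def cond_mean_def cset_def sg q1 using True by simp
    then show ?thesis using True pos by simp
  next
    case False
    have ae: "AE w in M. Ypot g t w = Yinf t w" using no_antic g t False by auto
    have "(\<integral>w. indicator (cset s q) w * (Ypot g t w - Yinf t w) \<partial>M) = (\<integral>w. 0 \<partial>M)"
    proof (rule integral_cong_AE)
      show "(\<lambda>w. indicator (cset s q) w * (Ypot g t w - Yinf t w)) \<in> borel_measurable M"
        using mom_inf mom_pot g t by (intro borel_measurable_times borel_measurable_diff borel_measurable_indicator cset_sets) auto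
      show "(\<lambda>w. 0::real) \<in> borel_measurable M" by simp
      show "AE w in M. indicator (cset s q) w * (Ypot g t w - Yinf t w) = 0" using ae by eventually_elim simp
    qed
    then show ?thesis using False by simp
  qed
  finally show ?thesis using sg q1 by simp
next
  case False
  have "(\<integral>w. indicator (cset s q) w * Yobs S Q Yinf Ypot t w \<partial>M) = (\<integral>w. indicator (cset s q) w * Yinf t w \<partial>M)"
    by (rule Bochner_Integration.integral_cong[OF refl])
       (use False in \<open>auto simp: cset_def Yobs_def split: split_indicator enat.split\<close>)
  then show ?thesis using False by auto
qed

end

theorem mainTheorem3:
  fixes M :: "'a measure" and T L K :: nat and SS :: "enat set"
    and S :: "'a \<Rightarrow> enat" and Q :: "'a \<Rightarrow> nat"
    and Yinf :: "nat \<Rightarrow> 'a \<Rightarrow> real" and Ypot :: "nat \<Rightarrow> nat \<Rightarrow> 'a \<Rightarrow> real"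
  assumes prob: "prob_space M"
    and SS_sub: "SS \<subseteq> enat ` {2..T} \<union> {\<infinity>}"
    and S_meas: "S \<in> M \<rightarrow>\<^sub>M count_space UNIV" and S_val: "\<forall>w\<in>space M. S w \<in> SS"
    and Q_meas: "Q \<in> M \<rightarrow>\<^sub>M count_space UNIV" and Q_val: "\<forall>w\<in>space M. Q w \<in> {0, 1}"
    and cells_pos: "\<forall>s\<in>SS. \<forall>q\<in>{0, 1}. measure M {w \<in> space M. S w = s \<and> Q w = q} > 0"
    and mom_inf: "\<forall>t\<in>{1..T}. Yinf t \<in> borel_measurable M \<and> integrable M (\<lambda>w. (Yinf t w)\<^sup>2)"
    and mom_pot: "\<forall>g\<in>Gtrg SS. \<forall>t\<in>{1..T}.
                    Ypot g t \<in> borel_measurable M \<and> integrable M (\<lambda>w. (Ypot g t w)\<^sup>2)"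
    and window: "\<forall>g\<in>Gtrg SS. \<forall>t\<in>{1..T}. - int L \<le> int t - int g \<and> int t - int g \<le> int K"
    and gram: "nonsingular_on (event_window L K) (demeaned_gram M T S Q)"
    and no_antic: "\<forall>g\<in>Gtrg SS. \<forall>t. 1 \<le> t \<and> t < g \<longrightarrow> (AE w in M. Ypot g t w = Yinf t w)"
    and ddd_pct: "\<forall>g\<in>Gtrg SS. \<forall>gc\<in>SS. \<forall>t\<in>{2..T}. enat g < gc \<and> enat t \<le> gc \<longrightarrow>
        Delta M S Q Yinf t (enat g) 1 - Delta M S Q Yinf t (enat g) 0
          = Delta M S Q Yinf t gc 1 - Delta M S Q Yinf t gc 0"
  shows "\<forall>j\<in>event_window L K.
           pop_coef M T S Q (event_window L K) (Yobs S Q Yinf Ypot) j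
             = (\<Sum>g\<in>Gtrg SS. \<Sum>l\<in>{0..K}.
                  omega_w M T S Q (event_window L K) j g l * CATT M S Q Yinf Ypot g l)"
proof -
  have fSS: "finite SS" by (rule finite_subset[OF SS_sub]) simp
  interpret ddd M T SS S Q
    by (intro ddd.intro ddd_axioms.intro prob fSS S_meas Q_meas S_val Q_val)
  let ?E = "event_window L K"
  let ?Y = "Yobs S Q Yinf Ypot"
  have fE: "finite ?E" by (rule finite_window)
  have inf: "\<infinity> \<in> SS" by (rule inf_in_SS[OF SS_sub window gram])
  obtain k d0 h0 where dec: "\<forall>s\<in>SS. \<forall>q\<in>{0,1}. \<forall>t\<in>{1..T}.
      (\<integral>w. indicator (cset s q) w * Yinf t w \<partial>M) = measure M (cset s q) * (k s q + d0 s t + h0 q t)"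
    using yinf_decomp[OF inf cells_pos mom_inf ddd_pct] by blast
  have "Gtrg SS \<subseteq> {2..T}" using SS_sub by (auto simp: Gtrg_def)
  then have fG: "finite (Gtrg SS)" by (rule finite_subset) simp
  define I where "I = Gtrg SS \<times> {0..K}"
  have fI: "finite I" unfolding I_def using fG by simp
  have "\<forall>p\<in>I. \<exists>z. unit_effect M (fst z) \<and> orth ?E (\<lambda>t w. Rgl S Q (fst p) (snd p) t w -
      vfun ?E (fst z) (fst (snd z)) (fst (snd (snd z))) (snd (snd (snd z))) t w)"
  proof
    fix p
    obtain a d h b where "unit_effect M a" "orth ?E (\<lambda>t w. Rgl S Q (fst p) (snd p) t w - vfun ?E a d h b t w)"
      using exists_orth[OF fE sqi_Rgl] by blast
    then show "\<exists>z. unit_effect M (fst z) \<and> orth ?E (\<lambda>t w. Rgl S Q (fst p) (snd p) t w -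
      vfun ?E (fst z) (fst (snd z)) (fst (snd (snd z))) (snd (snd (snd z))) t w)"
      by (intro exI[of _ "(a, d, h, b)"]) simp
  qed
  from bchoice[OF this] obtain zf where zf: "\<forall>p\<in>I. unit_effect M (fst (zf p)) \<and> orth ?E (\<lambda>t w. Rgl S Q (fst p) (snd p) t w -
      vfun ?E (fst (zf p)) (fst (snd (zf p))) (fst (snd (snd (zf p)))) (snd (snd (snd (zf p)))) t w)" by blast
  define A where "A p = fst (zf p)" for p
  define D where "D p = fst (snd (zf p))" for p
  define H where "H p = fst (snd (snd (zf p)))" for p
  define B where "B p = snd (snd (snd (zf p)))" for p
  define r where "r p = (\<lambda>t w. Rgl S Q (fst p) (snd p) t w - vfun ?E (A p) (D p) (H p) (B p) t w)" for p
  have uA: "\<And>p. p \<in> I \<Longrightarrow> unit_effect M (A p)" using zf unfolding A_def by blast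
  have orp: "\<And>p. p \<in> I \<Longrightarrow> orth ?E (r p)" using zf unfolding r_def A_def D_def H_def B_def by blast
  have srp: "\<And>p. p \<in> I \<Longrightarrow> sqi (r p)" unfolding r_def by (intro sqi_diff sqi_Rgl sqi_vfun fE uA)
  have om: "\<And>p j. p \<in> I \<Longrightarrow> j \<in> ?E \<Longrightarrow> omega_w M T S Q ?E j (fst p) (snd p) = B p j"
    unfolding omega_w_def using pop_coef_eq[OF fE sqi_Rgl uA orp[unfolded r_def] gram] by blast
  define C where "C p = CATT M S Q Yinf Ypot (fst p) (snd p)" for p
  define Z where "Z = (\<lambda>t w. ?Y t w - (\<Sum>p\<in>I. C p * Rgl S Q (fst p) (snd p) t w) - (k (S w) (Q w) + d0 (S w) t + h0 (Q w) t))"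
  have sY: "sqi ?Y" by (rule sqi_Yobs[OF fG mom_inf mom_pot])
  have sZ: "sqi Z" unfolding Z_def
    by (intro sqi_diff sY sqi_lin fI sqi_Rgl sqi_cell[of "\<lambda>s q t. k s q + d0 s t + h0 q t", simplified])
  have Zc0: "(\<integral>w. indicator (cset s q) w * Z t w \<partial>M) = 0"
    if s: "s \<in> SS" and q: "q \<in> {0,1}" and t: "t \<in> {1..T}" for s q t
  proof -
    define \<rho> where "\<rho> = (\<Sum>p\<in>I. C p * (if s = enat (fst p) \<and> q = 1 \<and> t = fst p + snd p then 1 else 0))"
    define \<kappa> where "\<kappa> = k s q + d0 s t + h0 q t"
    have iY: "integrable M (\<lambda>w. indicator (cset s q) w * ?Y t w)" by (rule int_ind[OF sqi_int[OF sY t]])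
    have "(\<integral>w. indicator (cset s q) w * Z t w \<partial>M) = (\<integral>w. indicator (cset s q) w * ?Y t w - (\<rho> + \<kappa>) * indicator (cset s q) w \<partial>M)"
      by (rule Bochner_Integration.integral_cong[OF refl])
         (auto simp: Z_def cset_def Rgl_def \<rho>_def \<kappa>_def split: split_indicator)
    also have "\<dots> = (\<integral>w. indicator (cset s q) w * ?Y t w \<partial>M) - (\<rho> + \<kappa>) * measure M (cset s q)"
    proof -
      have ii: "integrable M (\<lambda>w. (\<rho> + \<kappa>) * indicator (cset s q) w)"
        by (intro integrable_mult_right integrable_real_indicator cset_sets) (simp add: emeasure_eq_measure)
      have cs: "cset s q \<inter> space M = cset s q" by (auto simp: cset_def)
      show ?thesis by (subst Bochner_Integration.integral_diff[OF iY ii]) (simp add: cs)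
    qed
    also have "(\<integral>w. indicator (cset s q) w * ?Y t w \<partial>M) = measure M (cset s q) * \<kappa> + measure M (cset s q) * \<rho>"
    proof -
      have y: "(\<integral>w. indicator (cset s q) w * ?Y t w \<partial>M) = measure M (cset s q) * \<kappa> +
         (if (\<exists>g. s = enat g \<and> g \<le> t) \<and> q = 1 then measure M (cset s q) * CATT M S Q Yinf Ypot (the_enat s) (t - the_enat s) else 0)"
      proof -
        have d1: "(\<integral>w. indicator (cset s q) w * Yinf t w \<partial>M) = measure M (cset s q) * \<kappa>"
          using dec s q t unfolding \<kappa>_def by blast
        show ?thesis using Yobs_cell[OF cells_pos mom_inf mom_pot no_antic s q t] unfolding d1 .
      qed
      show ?thesis
      proof (cases "\<exists>g. s = enat g \<and> q = 1")
        case True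
        then obtain g where sg: "s = enat g" and q1: "q = 1" by auto
        have g: "g \<in> Gtrg SS" using s sg by (simp add: Gtrg_def)
        have "\<rho> = (if g \<le> t then C (g, t - g) else 0)"
          unfolding \<rho>_def I_def using rho_eval[OF fG g t window, of C] by (simp add: sg q1)
        then show ?thesis using y sg q1 by (auto simp: C_def)
      next
        case False
        then have "\<rho> = 0" unfolding \<rho>_def by (auto intro!: sum.neutral)
        then show ?thesis using y False by auto
      qed
    qed
    finally show ?thesis by (simp add: algebra_simps)
  qed
  have oZ: "orth ?E (dm Z)" by (rule orth_dm_cell0[OF fE sZ Zc0])
  define as where "as w = (\<Sum>p\<in>I. C p * A p w) + k (S w) (Q w) + mean Z w" for w
  define ds where "ds s t = (\<Sum>p\<in>I. C p * D p s t) + d0 s t" for s t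
  define hs where "hs q t = (\<Sum>p\<in>I. C p * H p q t) + h0 q t" for q t
  define bs where "bs e = (\<Sum>p\<in>I. C p * B p e)" for e
  have ua: "unit_effect M as"
    unfolding as_def by (intro unit_add unit_lin fI uA unit_mean sZ unit_cell)
  have eqpt: "?Y t w - vfun ?E as ds hs bs t w = (\<Sum>p\<in>I. C p * r p t w) + dm Z t w" for t w
  proof -
    have b1: "(\<Sum>e\<in>?E. bs e * Rev S Q e t w) = (\<Sum>p\<in>I. C p * (\<Sum>e\<in>?E. B p e * Rev S Q e t w))"
    proof -
      have "(\<Sum>e\<in>?E. bs e * Rev S Q e t w) = (\<Sum>e\<in>?E. \<Sum>p\<in>I. C p * (B p e * Rev S Q e t w))"
        unfolding bs_def by (simp add: sum_distrib_right mult.assoc)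
      also have "\<dots> = (\<Sum>p\<in>I. \<Sum>e\<in>?E. C p * (B p e * Rev S Q e t w))" by (rule sum.swap)
      also have "\<dots> = (\<Sum>p\<in>I. C p * (\<Sum>e\<in>?E. B p e * Rev S Q e t w))" by (simp add: sum_distrib_left)
      finally show ?thesis .
    qed
    have v1: "(\<Sum>p\<in>I. C p * vfun ?E (A p) (D p) (H p) (B p) t w) = (\<Sum>p\<in>I. C p * A p w) + (\<Sum>p\<in>I. C p * D p (S w) t)
        + (\<Sum>p\<in>I. C p * H p (Q w) t) + (\<Sum>p\<in>I. C p * (\<Sum>e\<in>?E. B p e * Rev S Q e t w))"
      unfolding vfun_def by (simp add: distrib_left sum.distrib)
    have r1: "(\<Sum>p\<in>I. C p * r p t w) = (\<Sum>p\<in>I. C p * Rgl S Q (fst p) (snd p) t w) - (\<Sum>p\<in>I. C p * vfun ?E (A p) (D p) (H p) (B p) t w)"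
      unfolding r_def by (simp add: right_diff_distrib sum_subtractf)
    show ?thesis
      unfolding r1 v1 dm_def unfolding vfun_def as_def ds_def hs_def b1 Z_def by simp
  qed
  have "orth ?E (\<lambda>t w. ?Y t w - vfun ?E as ds hs bs t w)"
    unfolding eqpt by (intro orth_add fE sqi_lin fI srp sqi_dm sZ orth_lin orp oZ)
  then have pc: "\<forall>j\<in>?E. pop_coef M T S Q ?E ?Y j = bs j"
    by (rule pop_coef_eq[OF fE sY ua _ gram])
  show ?thesis
  proof
    fix j assume j: "j \<in> ?E"
    have "pop_coef M T S Q ?E ?Y j = (\<Sum>p\<in>I. C p * B p j)" using pc j bs_def by simp
    also have "\<dots> = (\<Sum>p\<in>I. omega_w M T S Q ?E j (fst p) (snd p) * CATT M S Q Yinf Ypot (fst p) (snd p))"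
      using om j by (intro sum.cong refl) (simp add: C_def)
    also have "\<dots> = (\<Sum>g\<in>Gtrg SS. \<Sum>l\<in>{0..K}. omega_w M T S Q ?E j g l * CATT M S Q Yinf Ypot g l)"
      unfolding I_def by (simp add: sum.cartesian_product case_prod_beta)
    finally show "pop_coef M T S Q ?E ?Y j = (\<Sum>g\<in>Gtrg SS. \<Sum>l\<in>{0..K}. omega_w M T S Q ?E j g l * CATT M S Q Yinf Ypot g l)" .
  qed
qed

end
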